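(* Let $f:(R,\mathfrak{m})\to(S,\mathfrak{n})$ be a flat homomorphism of finite length of Noetherian local rings. Let $\varphi$ be a self-map of finite length of $R$, and let $\psi$ be a ring endomorphism of $S$ with $\psi\circ f=f\circ\varphi$. Then $\psi$ is a self-map of finite length of $S$ and $h_{\mathrm{alg}}(\varphi,R)=h_{\mathrm{alg}}(\psi,S)$.
   Context: A homomorphism $g:(A,\mathfrak{a})\to(B,\mathfrak{b})$ of Noetherian local rings is of finite length if it is local and $g(\mathfrak{a})B$ is $\mathfrak{b}$-primary; its length is $\lambda(g):=\ell_B(B/g(\mathfrak{a})B)$. A self-map of finite length is an endomorphism that is of finite length; its iterates are then of finite length. The algebraic entropy of a self-map of finite length $\varphi$ of $R$ is $h_{\mathrm{alg}}(\varphi,R):=\lim_{n\to\infty}\frac1n\log\lambda(\varphi^n)$ (the limit exists). *)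

theory Defs
  imports "HOL-Algebra.Algebra" "HOL-Library.Extended_Nat"
begin

definition noetherian_ring :: "('a, 'm) ring_scheme \<Rightarrow> bool" where
  "noetherian_ring R \<longleftrightarrow> cring R \<and>
     (\<forall>I. ideal I R \<longrightarrow> (\<exists>G. finite G \<and> G \<subseteq> carrier R \<and> I = genideal R G))"

definition local_ring :: "('a, 'm) ring_scheme \<Rightarrow> bool" where
  "local_ring R \<longleftrightarrow> cring R \<and> (\<exists>!m. maximalideal m R)"

definition noeth_local_ring :: "('a, 'm) ring_scheme \<Rightarrow> bool" where
  "noeth_local_ring R \<longleftrightarrow> noetherian_ring R \<and> local_ring R"

definition max_ideal :: "('a, 'm) ring_scheme \<Rightarrow> 'a set" where
  "max_ideal R = (THE m. maximalideal m R)"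

definition radical_ideal :: "('a, 'm) ring_scheme \<Rightarrow> 'a set \<Rightarrow> 'a set" where
  "radical_ideal R I = {x \<in> carrier R. \<exists>n::nat. x [^]\<^bsub>R\<^esub> n \<in> I}"

definition primary_ideal :: "('a, 'm) ring_scheme \<Rightarrow> 'a set \<Rightarrow> bool" where
  "primary_ideal R q \<longleftrightarrow> ideal q R \<and> q \<noteq> carrier R \<and>
     (\<forall>x\<in>carrier R. \<forall>y\<in>carrier R. x \<otimes>\<^bsub>R\<^esub> y \<in> q \<longrightarrow>
        x \<in> q \<or> (\<exists>n::nat. y [^]\<^bsub>R\<^esub> n \<in> q))"

definition is_primary_for :: "('a, 'm) ring_scheme \<Rightarrow> 'a set \<Rightarrow> 'a set \<Rightarrow> bool" where
  "is_primary_for R P q \<longleftrightarrow> primary_ideal R q \<and> radical_ideal R q = P"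

text \<open>Submodules of \<open>B/I\<close> correspond to ideals of \<open>B\<close> containing \<open>I\<close>; the length of
  \<open>B/I\<close> is the supremum of the lengths of strict chains of such submodules.\<close>
definition quot_length :: "('a, 'm) ring_scheme \<Rightarrow> 'a set \<Rightarrow> enat" where
  "quot_length B I = Sup {enat n | n. \<exists>J :: nat \<Rightarrow> 'a set.
       (\<forall>i\<le>n. ideal (J i) B \<and> I \<subseteq> J i) \<and> (\<forall>i<n. J i \<subset> J (Suc i))}"

definition finite_length_hom ::
  "('a, 'm) ring_scheme \<Rightarrow> ('b, 'n) ring_scheme \<Rightarrow> ('a \<Rightarrow> 'b) \<Rightarrow> bool" where
  "finite_length_hom A B g \<longleftrightarrow> g \<in> ring_hom A B \<and>
     g ` max_ideal A \<subseteq> max_ideal B \<and>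
     is_primary_for B (max_ideal B) (genideal B (g ` max_ideal A))"

text \<open>\<open>\<lambda>(g) = \<ell>_B(B / g(\<aa>)B)\<close> (a natural number when \<open>g\<close> has finite length).\<close>
definition hom_length ::
  "('a, 'm) ring_scheme \<Rightarrow> ('b, 'n) ring_scheme \<Rightarrow> ('a \<Rightarrow> 'b) \<Rightarrow> nat" where
  "hom_length A B g = the_enat (quot_length B (genideal B (g ` max_ideal A)))"

definition finite_length_selfmap :: "('a, 'm) ring_scheme \<Rightarrow> ('a \<Rightarrow> 'a) \<Rightarrow> bool" where
  "finite_length_selfmap R \<phi> \<longleftrightarrow> finite_length_hom R R \<phi>"

definition alg_entropy :: "('a, 'm) ring_scheme \<Rightarrow> ('a \<Rightarrow> 'a) \<Rightarrow> real" where
  "alg_entropy R \<phi> = lim (\<lambda>n. ln (real (hom_length R R (\<phi> ^^ n))) / real n)"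

text \<open>\<open>S\<close> is flat as an \<open>R\<close>-module via \<open>f\<close>, expressed by the equational criterion
  of flatness: every relation \<open>\<Sum> f(r_i) x_i = 0\<close> is trivial.\<close>
definition flat_hom ::
  "('a, 'm) ring_scheme \<Rightarrow> ('b, 'n) ring_scheme \<Rightarrow> ('a \<Rightarrow> 'b) \<Rightarrow> bool" where
  "flat_hom R S f \<longleftrightarrow>
     (\<forall>(k::nat) (r::nat \<Rightarrow> 'a) (x::nat \<Rightarrow> 'b).
        r ` {..<k} \<subseteq> carrier R \<longrightarrow> x ` {..<k} \<subseteq> carrier S \<longrightarrow>
        finsum S (\<lambda>i. f (r i) \<otimes>\<^bsub>S\<^esub> x i) {..<k} = \<zero>\<^bsub>S\<^esub> \<longrightarrow>
        (\<exists>(l::nat) (a::nat \<Rightarrow> nat \<Rightarrow> 'a) (y::nat \<Rightarrow> 'b).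
           y ` {..<l} \<subseteq> carrier S \<and>
           (\<forall>i<k. \<forall>j<l. a i j \<in> carrier R) \<and>
           (\<forall>i<k. x i = finsum S (\<lambda>j. f (a i j) \<otimes>\<^bsub>S\<^esub> y j) {..<l}) \<and>
           (\<forall>j<l. finsum R (\<lambda>i. r i \<otimes>\<^bsub>R\<^esub> a i j) {..<k} = \<zero>\<^bsub>R\<^esub>)))"

end

theory Submission
  imports Defs
begin


lemma (in cring) idealI_simple:
  assumes "I \<subseteq> carrier R" "\<zero> \<in> I"
    and "\<And>a b. a \<in> I \<Longrightarrow> b \<in> I \<Longrightarrow> a \<oplus> b \<in> I"
    and "\<And>a x. a \<in> I \<Longrightarrow> x \<in> carrier R \<Longrightarrow> x \<otimes> a \<in> I"
  shows "ideal I R"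
proof (rule idealI)
  show "ring R" by (rule ring_axioms)
  show "subgroup I (add_monoid R)"
  proof (rule add.subgroupI)
    show "I \<subseteq> carrier R" using assms(1) by simp
    show "I \<noteq> {}" using assms(2) by blast
    fix a assume a: "a \<in> I"
    hence ac: "a \<in> carrier R" using assms(1) by blast
    have "(\<ominus> \<one>) \<otimes> a \<in> I" using assms(4)[OF a] by simp
    moreover have "\<ominus> a = (\<ominus> \<one>) \<otimes> a" using ac by algebra
    ultimately have "\<ominus> a \<in> I" by simp
    thus "\<ominus> a \<in> I" .
  next
    fix a b assume "a \<in> I" "b \<in> I" thus "a \<oplus> b \<in> I" using assms(3) by simp
  qed
  fix a x assume "a \<in> I" "x \<in> carrier R"
  thus "x \<otimes> a \<in> I" by (rule assms(4))
  thus "a \<otimes> x \<in> I" using \<open>a \<in> I\<close> \<open>x \<in> carrier R\<close> assms(1) m_comm by auto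
qed

lemma ideal_sub: "ideal I R \<Longrightarrow> I \<subseteq> carrier R"
  by (meson ideal.Icarr subsetI)

definition colon :: "('a, 'm) ring_scheme \<Rightarrow> 'a set \<Rightarrow> 'a \<Rightarrow> 'a set" where
  "colon B K y = {a \<in> carrier B. a \<otimes>\<^bsub>B\<^esub> y \<in> K}"

lemma (in cring) colon_ideal:
  assumes K: "ideal K R" and y: "y \<in> carrier R"
  shows "ideal (colon R K y) R"
proof (rule idealI_simple)
  show "colon R K y \<subseteq> carrier R" unfolding colon_def by auto
  show "\<zero> \<in> colon R K y" unfolding colon_def using y K
    by (simp add: additive_subgroup.zero_closed ideal.axioms(1))
  fix a b assume "a \<in> colon R K y" "b \<in> colon R K y"
  then show "a \<oplus> b \<in> colon R K y" unfolding colon_def using y K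
    by (simp add: l_distr additive_subgroup.a_closed ideal.axioms(1))
next
  fix a x assume "a \<in> colon R K y" "x \<in> carrier R"
  then show "x \<otimes> a \<in> colon R K y" unfolding colon_def using y K
    by (simp add: m_assoc ideal.I_l_closed)
qed

lemma (in cring) colon_sup:
  assumes K: "ideal K R" and y: "y \<in> carrier R"
  shows "K \<subseteq> colon R K y"
  unfolding colon_def using K y ideal.I_r_closed ideal_sub by fastforce

lemma (in cring) colon_mono:
  "K \<subseteq> K' \<Longrightarrow> colon R K y \<subseteq> colon R K' y"
  unfolding colon_def by auto

lemma (in cring) mem_sum_PIdl:
  "z \<in> K <+>\<^bsub>R\<^esub> PIdl y \<longleftrightarrow> (\<exists>k\<in>K. \<exists>b\<in>carrier R. z = k \<oplus> b \<otimes> y)"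
  unfolding set_add_def' cgenideal_def by auto

lemma (in cring) sum_PIdl_ideal:
  "ideal K R \<Longrightarrow> y \<in> carrier R \<Longrightarrow> ideal (K <+>\<^bsub>R\<^esub> PIdl y) R"
  by (simp add: add_ideals cgenideal_ideal)

lemma (in cring) sum_PIdl_sup:
  assumes "ideal K R" "y \<in> carrier R"
  shows "K \<subseteq> K <+>\<^bsub>R\<^esub> PIdl y" "y \<in> K <+>\<^bsub>R\<^esub> PIdl y"
proof -
  show "K \<subseteq> K <+>\<^bsub>R\<^esub> PIdl y"
  proof
    fix k assume "k \<in> K"
    hence "k = k \<oplus> \<zero> \<otimes> y" using assms ideal_sub by fastforce
    thus "k \<in> K <+>\<^bsub>R\<^esub> PIdl y" using \<open>k \<in> K\<close> mem_sum_PIdl by blast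
  qed
  have "y = \<zero> \<oplus> \<one> \<otimes> y" using assms by simp
  thus "y \<in> K <+>\<^bsub>R\<^esub> PIdl y" using mem_sum_PIdl assms
    by (metis additive_subgroup.zero_closed ideal.axioms(1) one_closed)
qed

lemma (in cring) sum_PIdl_least:
  assumes "ideal K R" "y \<in> carrier R" "ideal J R" "K \<subseteq> J" "y \<in> J"
  shows "K <+>\<^bsub>R\<^esub> PIdl y \<subseteq> J"
proof
  fix z assume "z \<in> K <+>\<^bsub>R\<^esub> PIdl y"
  then obtain k b where "k \<in> K" "b \<in> carrier R" "z = k \<oplus> b \<otimes> y" using mem_sum_PIdl by blast
  thus "z \<in> J" using assms
    by (meson additive_subgroup.a_closed ideal.I_l_closed ideal.axioms(1) subsetD)
qed

section \<open>Interval lengths\<close>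

definition ischain :: "('a, 'm) ring_scheme \<Rightarrow> 'a set \<Rightarrow> 'a set \<Rightarrow> nat \<Rightarrow> (nat \<Rightarrow> 'a set) \<Rightarrow> bool" where
  "ischain B I J n C \<longleftrightarrow> (\<forall>i\<le>n. ideal (C i) B \<and> I \<subseteq> C i \<and> C i \<subseteq> J) \<and> (\<forall>i<n. C i \<subset> C (Suc i))"

definition len :: "('a, 'm) ring_scheme \<Rightarrow> 'a set \<Rightarrow> 'a set \<Rightarrow> enat" where
  "len B I J = Sup {enat n | n. \<exists>C. ischain B I J n C}"

lemma quot_length_len: "quot_length B I = len B I (carrier B)"
proof -
  have eq: "(\<forall>i\<le>n. ideal (C i) B \<and> I \<subseteq> C i) \<longleftrightarrow> (\<forall>i\<le>n. ideal (C i) B \<and> I \<subseteq> C i \<and> C i \<subseteq> carrier B)"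
    for n C using ideal_sub by blast
  show ?thesis unfolding quot_length_def len_def ischain_def by (simp only: eq)
qed

lemma len_upper: "ischain B I J n C \<Longrightarrow> enat n \<le> len B I J"
  unfolding len_def by (rule Sup_upper) blast

lemma len_least: "(\<And>n C. ischain B I J n C \<Longrightarrow> enat n \<le> Z) \<Longrightarrow> len B I J \<le> Z"
  unfolding len_def by (rule Sup_least) blast

lemma len_mono: 
  assumes "I' \<subseteq> I" "J \<subseteq> J'" shows "len B I J \<le> len B I' J'"
proof (rule len_least)
  fix n C assume "ischain B I J n C"
  hence "ischain B I' J' n C" using assms unfolding ischain_def by blast
  thus "enat n \<le> len B I' J'" by (rule len_upper)
qed

lemma len_map:
  assumes "\<And>K. ideal K B \<Longrightarrow> I \<subseteq> K \<Longrightarrow> K \<subseteq> J \<Longrightarrow> ideal (h K) B' \<and> I' \<subseteq> h K \<and> h K \<subseteq> J'"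
    and "\<And>K K'. ideal K B \<Longrightarrow> I \<subseteq> K \<Longrightarrow> K' \<subseteq> J \<Longrightarrow> ideal K' B \<Longrightarrow> K \<subset> K' \<Longrightarrow> h K \<subset> h K'"
  shows "len B I J \<le> len B' I' J'"
proof (rule len_least)
  fix n C assume c: "ischain B I J n C"
  have "ischain B' I' J' n (h \<circ> C)" unfolding ischain_def
  proof (intro conjI allI impI)
    fix i assume "i \<le> n" thus "ideal ((h \<circ> C) i) B'" "I' \<subseteq> (h \<circ> C) i" "(h \<circ> C) i \<subseteq> J'"
      using c assms(1) unfolding ischain_def by auto
  next
    fix i assume "i < n" thus "(h \<circ> C) i \<subset> (h \<circ> C) (Suc i)"
      using c assms(2)[of "C i" "C (Suc i)"] unfolding ischain_def by auto
  qed
  thus "enat n \<le> len B' I' J'" by (rule len_upper)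
qed

lemma count_chain:
  assumes "\<forall>i\<le>n. ideal (a i) B \<and> I \<subseteq> a i \<and> a i \<subseteq> J" "\<forall>i<n. a i \<subseteq> a (Suc i)"
  shows "\<exists>C. ischain B I J (card {i. i < n \<and> a i \<subset> a (Suc i)}) C \<and> C (card {i. i < n \<and> a i \<subset> a (Suc i)}) = a n"
  using assms
proof (induction n)
  case 0
  show ?case by (rule exI[of _ "\<lambda>_. a 0"]) (use 0 in \<open>auto simp: ischain_def\<close>)
next
  case (Suc n)
  then obtain C where C: "ischain B I J (card {i. i < n \<and> a i \<subset> a (Suc i)}) C"
     "C (card {i. i < n \<and> a i \<subset> a (Suc i)}) = a n" by auto
  define s where "s = card {i. i < n \<and> a i \<subset> a (Suc i)}"
  show ?case
  proof (cases "a n \<subset> a (Suc n)")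
    case True
    have eq: "{i. i < Suc n \<and> a i \<subset> a (Suc i)} = insert n {i. i < n \<and> a i \<subset> a (Suc i)}"
      using True by auto
    have cs: "card {i. i < Suc n \<and> a i \<subset> a (Suc i)} = Suc s" unfolding eq s_def by simp
    let ?C = "C(Suc s := a (Suc n))"
    have ch: "(\<forall>i\<le>s. ideal (C i) B \<and> I \<subseteq> C i \<and> C i \<subseteq> J) \<and> (\<forall>i<s. C i \<subset> C (Suc i))"
      using C(1) unfolding ischain_def s_def by blast
    have Cs: "C s = a n" using C(2) unfolding s_def .
    have an: "ideal (a (Suc n)) B \<and> I \<subseteq> a (Suc n) \<and> a (Suc n) \<subseteq> J" using Suc.prems(1) by blast
    have "ischain B I J (Suc s) ?C" unfolding ischain_def
    proof (intro conjI allI impI)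
      fix i assume "i \<le> Suc s"
      thus "ideal (?C i) B" "I \<subseteq> ?C i" "?C i \<subseteq> J"
        using ch an by (cases "i = Suc s"; simp)+
    next
      fix i assume i: "i < Suc s"
      show "?C i \<subset> ?C (Suc i)"
      proof (cases "i = s")
        case True thus ?thesis using Cs \<open>a n \<subset> a (Suc n)\<close> by simp
      next
        case False thus ?thesis using i ch by simp
      qed
    qed
    thus ?thesis unfolding cs by auto
  next
    case False
    hence eqa: "a n = a (Suc n)" using Suc.prems by auto
    have eq: "{i. i < Suc n \<and> a i \<subset> a (Suc i)} = {i. i < n \<and> a i \<subset> a (Suc i)}"
      using False less_Suc_eq by auto
    show ?thesis unfolding eq using C eqa by auto
  qed
qed

lemma count_len:
  assumes "\<forall>i\<le>n. ideal (a i) B \<and> I \<subseteq> a i \<and> a i \<subseteq> J" "\<forall>i<n. a i \<subseteq> a (Suc i)"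
  shows "enat (card {i. i < n \<and> a i \<subset> a (Suc i)}) \<le> len B I J"
  using count_chain[OF assms] len_upper by blast

lemma (in ring) modular_eq:
  assumes "ideal C R" "ideal C' R" "ideal J R" "C \<subseteq> C'"
    "C \<inter> J = C' \<inter> J" "C <+>\<^bsub>R\<^esub> J = C' <+>\<^bsub>R\<^esub> J"
  shows "C = C'"
proof
  show "C' \<subseteq> C"
  proof
    fix x assume x: "x \<in> C'"
    have xc: "x \<in> carrier R" using x assms(2) ideal_sub by blast
    have "x = x \<oplus> \<zero>" using xc by simp
    moreover have "\<zero> \<in> J" using assms(3) by (simp add: additive_subgroup.zero_closed ideal.axioms(1))
    ultimately have "x \<in> C' <+>\<^bsub>R\<^esub> J" using x unfolding set_add_def' by blast
    hence "x \<in> C <+>\<^bsub>R\<^esub> J" using assms(6) by simp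
    then obtain c j where cj: "c \<in> C" "j \<in> J" "x = c \<oplus> j" unfolding set_add_def' by blast
    have cc: "c \<in> carrier R" "j \<in> carrier R" using cj assms ideal_sub by blast+
    have "(\<ominus> c) \<oplus> (c \<oplus> j) = j" using cc by algebra
    hence "j = (\<ominus> c) \<oplus> x" using cj by simp
    moreover have "\<ominus> c \<in> C'" using cj assms
      by (meson additive_subgroup.a_inv_closed ideal.axioms(1) subsetD)
    ultimately have "j \<in> C'" using x assms(2)
      by (simp add: additive_subgroup.a_closed ideal.axioms(1))
    hence "j \<in> C" using cj assms(5) by blast
    thus "x \<in> C" using cj assms(1) by (simp add: additive_subgroup.a_closed ideal.axioms(1))
  qed
qed (rule assms(4))

lemma (in ring) set_add_ideal_props:
  assumes "ideal C R" "ideal J R"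
  shows "ideal (C <+>\<^bsub>R\<^esub> J) R" "J \<subseteq> C <+>\<^bsub>R\<^esub> J" "C \<subseteq> C <+>\<^bsub>R\<^esub> J"
    "ideal K R \<Longrightarrow> C \<subseteq> K \<Longrightarrow> J \<subseteq> K \<Longrightarrow> C <+>\<^bsub>R\<^esub> J \<subseteq> K"
  using add_ideals[OF assms] union_genideal[OF assms, symmetric] genideal_self[of "C \<union> J"]
    genideal_minimal[of K "C \<union> J"] assms ideal_sub[of C R] ideal_sub[of J R]
  by auto

lemma (in ring) len_subadd:
  assumes I: "ideal I R" and J: "ideal J R" and K: "ideal K R" and IJ: "I \<subseteq> J" and JK: "J \<subseteq> K"
  shows "len R I K \<le> len R I J + len R J K"
proof (rule len_least)
  fix n C assume c: "ischain R I K n C"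
  define a where "a i = C i \<inter> J" for i
  define b where "b i = C i <+>\<^bsub>R\<^esub> J" for i
  have ci: "i \<le> n \<Longrightarrow> ideal (C i) R \<and> I \<subseteq> C i \<and> C i \<subseteq> K" for i using c unfolding ischain_def by auto
  have cs: "i < n \<Longrightarrow> C i \<subset> C (Suc i)" for i using c unfolding ischain_def by auto
  have a1: "\<forall>i\<le>n. ideal (a i) R \<and> I \<subseteq> a i \<and> a i \<subseteq> J"
    using ci IJ J unfolding a_def by (auto intro: i_intersect)
  have a2: "\<forall>i<n. a i \<subseteq> a (Suc i)" using cs unfolding a_def by auto
  have b1: "\<forall>i\<le>n. ideal (b i) R \<and> J \<subseteq> b i \<and> b i \<subseteq> K"
    using ci J JK K set_add_ideal_props unfolding b_def by auto
  have b2: "\<forall>i<n. b i \<subseteq> b (Suc i)"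
  proof (intro allI impI)
    fix i assume "i < n"
    have i1: "ideal (C (Suc i)) R" "ideal (C i) R" using ci \<open>i < n\<close> by auto
    have "C i \<subseteq> C (Suc i)" using cs \<open>i < n\<close> by auto
    hence "C i \<subseteq> C (Suc i) <+>\<^bsub>R\<^esub> J" using set_add_ideal_props(3)[OF i1(1) J] by blast
    thus "b i \<subseteq> b (Suc i)" unfolding b_def
      using set_add_ideal_props(4)[OF i1(2) J set_add_ideal_props(1)[OF i1(1) J]]
        set_add_ideal_props(2)[OF i1(1) J] by blast
  qed
  have "{..<n} \<subseteq> {i. i < n \<and> a i \<subset> a (Suc i)} \<union> {i. i < n \<and> b i \<subset> b (Suc i)}"
  proof
    fix i assume "i \<in> {..<n}"
    hence i: "i < n" by simp
    show "i \<in> {i. i < n \<and> a i \<subset> a (Suc i)} \<union> {i. i < n \<and> b i \<subset> b (Suc i)}"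
    proof (rule ccontr)
      assume "\<not> ?thesis"
      hence "a i = a (Suc i)" "b i = b (Suc i)" using a2 b2 i by auto
      moreover have "ideal (C i) R" "ideal (C (Suc i)) R" "C i \<subseteq> C (Suc i)" using ci[of i] ci[of "Suc i"] cs[OF i] i by auto
      ultimately have "C i = C (Suc i)" using modular_eq[of "C i" "C (Suc i)" J] J unfolding a_def b_def
        by blast
      thus False using cs i by auto
    qed
  qed
  moreover have "finite ({i. i < n \<and> a i \<subset> a (Suc i)} \<union> {i. i < n \<and> b i \<subset> b (Suc i)})"
    by (rule finite_subset[of _ "{..<n}"]) auto
  ultimately have "card {..<n} \<le> card ({i. i < n \<and> a i \<subset> a (Suc i)} \<union> {i. i < n \<and> b i \<subset> b (Suc i)})"
    by (rule card_mono[rotated])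
  hence "n \<le> card ({i. i < n \<and> a i \<subset> a (Suc i)} \<union> {i. i < n \<and> b i \<subset> b (Suc i)})" by simp
  also have "\<dots> \<le> card {i. i < n \<and> a i \<subset> a (Suc i)} + card {i. i < n \<and> b i \<subset> b (Suc i)}"
    by (rule card_Un_le)
  finally have "enat n \<le> enat (card {i. i < n \<and> a i \<subset> a (Suc i)}) + enat (card {i. i < n \<and> b i \<subset> b (Suc i)})"
    by simp
  also have "\<dots> \<le> len R I J + len R J K"
    using count_len[OF a1 a2] count_len[OF b1 b2] by (rule add_mono)
  finally show "enat n \<le> len R I J + len R J K" .
qed



lemma len_top_zero: "len B (carrier B) (carrier B) = 0"
proof -
  have "len B (carrier B) (carrier B) \<le> 0"
  proof (rule len_least)
    fix n C assume c: "ischain B (carrier B) (carrier B) n C"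
    show "enat n \<le> 0"
    proof (rule ccontr)
      assume "\<not> enat n \<le> 0"
      hence n: "0 < n" by (simp add: zero_enat_def)
      have "C 0 \<subset> C 1" "C 0 = carrier B" "C 1 \<subseteq> carrier B" using c n unfolding ischain_def by auto
      thus False by auto
    qed
  qed
  thus ?thesis by simp
qed

lemma (in ring) len_ge1:
  assumes "ideal I R" "I \<noteq> carrier R"
  shows "1 \<le> len R I (carrier R)"
proof -
  have "ischain R I (carrier R) 1 (\<lambda>i. if i = 0 then I else carrier R)"
    unfolding ischain_def using assms ideal_sub[OF assms(1)] oneideal by auto
  from len_upper[OF this] show ?thesis by (simp add: one_enat_def)
qed

lemma len_strict:
  assumes "ideal I B" "ideal I' B" "I \<subset> I'" "I' \<subseteq> K" "ideal K B" "len B I K = enat k"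
  shows "\<exists>k'<k. len B I' K = enat k'"
proof -
  have step: "Suc n \<le> k" if c: "ischain B I' K n C" for n C
  proof -
    let ?D = "\<lambda>i. if i = 0 then I else C (i - 1)"
    have "ischain B I K (Suc n) ?D" unfolding ischain_def
    proof (intro conjI allI impI)
      fix i assume i: "i \<le> Suc n"
      have cc: "\<And>j. j \<le> n \<Longrightarrow> ideal (C j) B \<and> I' \<subseteq> C j \<and> C j \<subseteq> K"
        using c unfolding ischain_def by blast
      have "ideal (?D i) B \<and> I \<subseteq> ?D i \<and> ?D i \<subseteq> K"
      proof (cases "i = 0")
        case True thus ?thesis using assms by simp
      next
        case False
        hence "i - 1 \<le> n" using i by simp
        from cc[OF this] show ?thesis using False assms(3) by auto
      qed
      thus "ideal (?D i) B" "I \<subseteq> ?D i" "?D i \<subseteq> K" by blast+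
    next
      fix i assume i: "i < Suc n"
      show "?D i \<subset> ?D (Suc i)"
      proof (cases "i = 0")
        case True
        have "I' \<subseteq> C 0" using c unfolding ischain_def by auto
        thus ?thesis using True assms(3) by auto
      next
        case False
        hence i1: "i - 1 < n" using i by simp
        have "C (i - 1) \<subset> C (Suc (i - 1))" using c i1 unfolding ischain_def by blast
        moreover have "Suc (i - 1) = i" using False by simp
        ultimately show ?thesis using False by simp
      qed
    qed
    from len_upper[OF this] assms(6) show ?thesis by simp
  qed
  have "ischain B I' K 0 (\<lambda>_. K)" unfolding ischain_def using assms by auto
  from step[OF this] have k1: "1 \<le> k" by simp
  have "len B I' K \<le> enat (k - 1)"
  proof (rule len_least)
    fix n C assume "ischain B I' K n C"
    from step[OF this] show "enat n \<le> enat (k - 1)" by simp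
  qed
  then obtain k' where "len B I' K = enat k'" using enat_ile by blast
  moreover have "k' < k" using \<open>len B I' K \<le> enat (k - 1)\<close> k1 calculation by simp
  ultimately show ?thesis by blast
qed

lemma (in cring) len_colon:
  assumes K: "ideal K R" and y: "y \<in> carrier R"
  shows "len R K (K <+>\<^bsub>R\<^esub> PIdl y) \<le> len R (colon R K y) (carrier R)"
proof (rule len_map[where h = "\<lambda>C. colon R C y"])
  fix C assume "ideal C R" "K \<subseteq> C" "C \<subseteq> K <+>\<^bsub>R\<^esub> PIdl y"
  thus "ideal (colon R C y) R \<and> colon R K y \<subseteq> colon R C y \<and> colon R C y \<subseteq> carrier R"
    using colon_ideal[OF _ y] colon_mono unfolding colon_def by auto
next
  fix C C' assume C: "ideal C R" "K \<subseteq> C" "C' \<subseteq> K <+>\<^bsub>R\<^esub> PIdl y" "ideal C' R" "C \<subset> C'"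
  have sub: "colon R C y \<subseteq> colon R C' y" using C colon_mono by auto
  obtain c where c: "c \<in> C'" "c \<notin> C" using C by auto
  then obtain k b where kb: "k \<in> K" "b \<in> carrier R" "c = k \<oplus> b \<otimes> y"
    using C(3) mem_sum_PIdl by blast
  have kc: "k \<in> carrier R" using kb K ideal_sub by blast
  have "b \<otimes> y = \<ominus> k \<oplus> c"
  proof -
    have "\<ominus> k \<oplus> (k \<oplus> b \<otimes> y) = b \<otimes> y" using kc kb y by algebra
    thus ?thesis using kb by simp
  qed
  moreover have "\<ominus> k \<in> C'" using kb C K
    by (meson additive_subgroup.a_inv_closed ideal.axioms(1) psubset_imp_subset subsetD)
  ultimately have "b \<otimes> y \<in> C'" using c C(4)
    by (simp add: additive_subgroup.a_closed ideal.axioms(1))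
  hence "b \<in> colon R C' y" unfolding colon_def using kb by simp
  moreover have "b \<notin> colon R C y"
  proof
    assume "b \<in> colon R C y"
    hence "b \<otimes> y \<in> C" unfolding colon_def by simp
    moreover have "k \<in> C" using kb C by blast
    ultimately have "c \<in> C" using kb C(1) by (simp add: additive_subgroup.a_closed ideal.axioms(1))
    thus False using c by simp
  qed
  ultimately show "colon R C y \<subset> colon R C' y" using sub by blast
qed

lemma (in cring) len_split:
  assumes K: "ideal K R" and y: "y \<in> carrier R"
  shows "len R K (carrier R) \<le> len R (K <+>\<^bsub>R\<^esub> PIdl y) (carrier R) + len R (colon R K y) (carrier R)"
proof -
  have J: "ideal (K <+>\<^bsub>R\<^esub> PIdl y) R" by (rule sum_PIdl_ideal[OF K y])
  have "len R K (carrier R) \<le> len R K (K <+>\<^bsub>R\<^esub> PIdl y) + len R (K <+>\<^bsub>R\<^esub> PIdl y) (carrier R)"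
    by (rule len_subadd[OF K J oneideal sum_PIdl_sup(1)[OF K y] ideal_sub[OF J]])
  also have "\<dots> \<le> len R (colon R K y) (carrier R) + len R (K <+>\<^bsub>R\<^esub> PIdl y) (carrier R)"
    using len_colon[OF K y] by (rule add_right_mono)
  finally show ?thesis by (simp add: add.commute)
qed

section \<open>Local rings\<close>

lemma local_max: 
  assumes "local_ring B" shows "maximalideal (max_ideal B) B"
proof -
  have "\<exists>!m. maximalideal m B" using assms unfolding local_ring_def by simp
  from theI'[OF this] show ?thesis unfolding max_ideal_def .
qed

lemma local_unique:
  assumes "local_ring B" "maximalideal M B" shows "M = max_ideal B"
proof -
  have u: "\<exists>!m. maximalideal m B" using assms unfolding local_ring_def by simp
  have "(THE m. maximalideal m B) = M"
    by (rule the_equality) (use assms(2) u in blast)+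
  thus ?thesis unfolding max_ideal_def by simp
qed

lemma local_cring: "local_ring B \<Longrightarrow> cring B"
  unfolding local_ring_def by simp

lemma local_max_ideal: "local_ring B \<Longrightarrow> ideal (max_ideal B) B"
  using local_max maximalideal.axioms(1) by blast

lemma local_max_ne: 
  assumes "local_ring B" shows "max_ideal B \<noteq> carrier B"
proof -
  have "carrier B \<noteq> max_ideal B" by (rule maximalideal.I_notcarr[OF local_max[OF assms]])
  thus ?thesis by simp
qed

lemma local_one_notin: 
  assumes "local_ring B" shows "\<one>\<^bsub>B\<^esub> \<notin> max_ideal B"
proof
  assume "\<one>\<^bsub>B\<^esub> \<in> max_ideal B"
  hence "max_ideal B = carrier B" by (rule ideal.one_imp_carrier[OF local_max_ideal[OF assms]])
  thus False using local_max_ne[OF assms] by simp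
qed

lemma local_proper_sub:
  assumes loc: "local_ring B" and I: "ideal I B" "I \<noteq> carrier B"
  shows "I \<subseteq> max_ideal B"
proof -
  interpret cring B using local_cring[OF loc] .
  let ?A = "{J. ideal J B \<and> I \<subseteq> J \<and> \<one>\<^bsub>B\<^esub> \<notin> J}"
  have oneI: "\<one>\<^bsub>B\<^esub> \<notin> I" using I ideal.one_imp_carrier by blast
  have "\<exists>M\<in>?A. \<forall>U\<in>?A. M \<subseteq> U \<longrightarrow> U = M"
  proof (rule subset_Zorn_nonempty)
    show "?A \<noteq> {}" using I oneI by blast
  next
    fix \<C> assume ne: "\<C> \<noteq> {}" and ch: "subset.chain ?A \<C>"
    have CA: "\<And>U. U \<in> \<C> \<Longrightarrow> ideal U B \<and> I \<subseteq> U \<and> \<one>\<^bsub>B\<^esub> \<notin> U"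
      using ch unfolding subset_chain_def by blast
    have cmp: "\<And>U V. U \<in> \<C> \<Longrightarrow> V \<in> \<C> \<Longrightarrow> U \<subseteq> V \<or> V \<subseteq> U"
      using ch unfolding subset_chain_def by blast
    obtain C0 where C0: "C0 \<in> \<C>" using ne by blast
    have "ideal (\<Union>\<C>) B"
    proof (rule idealI_simple)
      show "\<Union>\<C> \<subseteq> carrier B"
      proof
        fix z assume "z \<in> \<Union>\<C>"
        then obtain U where U: "U \<in> \<C>" "z \<in> U" by blast
        have "U \<subseteq> carrier B" using CA[OF U(1)] ideal_sub by blast
        thus "z \<in> carrier B" using U(2) by blast
      qed
      have "ideal C0 B" using CA[OF C0] by blast
      hence "\<zero>\<^bsub>B\<^esub> \<in> C0" by (simp add: additive_subgroup.zero_closed ideal.axioms(1))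
      thus "\<zero>\<^bsub>B\<^esub> \<in> \<Union>\<C>" using C0 by blast
    next
      fix a b assume "a \<in> \<Union>\<C>" "b \<in> \<Union>\<C>"
      then obtain U V where XY: "U \<in> \<C>" "V \<in> \<C>" "a \<in> U" "b \<in> V" by blast
      have iU: "ideal U B" and iV: "ideal V B" using CA XY by blast+
      show "a \<oplus>\<^bsub>B\<^esub> b \<in> \<Union>\<C>"
      proof (cases "U \<subseteq> V")
        case True
        hence "a \<in> V" using XY by blast
        hence "a \<oplus>\<^bsub>B\<^esub> b \<in> V" using XY(4) iV
          by (simp add: additive_subgroup.a_closed ideal.axioms(1))
        thus ?thesis using XY by blast
      next
        case False
        hence "V \<subseteq> U" using cmp XY by blast
        hence "b \<in> U" using XY by blast
        hence "a \<oplus>\<^bsub>B\<^esub> b \<in> U" using XY(3) iU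
          by (simp add: additive_subgroup.a_closed ideal.axioms(1))
        thus ?thesis using XY by blast
      qed
    next
      fix a x assume "a \<in> \<Union>\<C>" "x \<in> carrier B"
      then obtain U where U: "U \<in> \<C>" "a \<in> U" by blast
      have "ideal U B" using CA[OF U(1)] by blast
      hence "x \<otimes>\<^bsub>B\<^esub> a \<in> U" using U(2) \<open>x \<in> carrier B\<close> by (rule ideal.I_l_closed)
      thus "x \<otimes>\<^bsub>B\<^esub> a \<in> \<Union>\<C>" using U(1) by blast
    qed
    moreover have "I \<subseteq> \<Union>\<C>" using CA[OF C0] C0 by blast
    moreover have "\<one>\<^bsub>B\<^esub> \<notin> \<Union>\<C>" using CA by blast
    ultimately show "\<Union>\<C> \<in> ?A" by blast
  qed
  then obtain M where M: "M \<in> ?A" and Mmax0: "\<forall>U\<in>?A. M \<subseteq> U \<longrightarrow> U = M" by (rule bexE)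
  have Mmax: "\<And>U. U \<in> ?A \<Longrightarrow> M \<subseteq> U \<Longrightarrow> U = M" using Mmax0 by simp
  have iM: "ideal M B" and IM: "I \<subseteq> M" and oM: "\<one>\<^bsub>B\<^esub> \<notin> M" using M by simp_all
  have "maximalideal M B"
  proof (rule maximalidealI)
    show "ideal M B" by (rule iM)
    show "carrier B \<noteq> M" using oM by blast
    fix J assume J: "ideal J B" "M \<subseteq> J" "J \<subseteq> carrier B"
    show "J = M \<or> J = carrier B"
    proof (cases "\<one>\<^bsub>B\<^esub> \<in> J")
      case True thus ?thesis using ideal.one_imp_carrier[OF J(1)] by blast
    next
      case False 
      hence "J \<in> ?A" using J IM by simp
      from Mmax[OF this J(2)] show ?thesis by simp
    qed
  qed
  hence "M = max_ideal B" using local_unique loc by blast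
  thus ?thesis using IM by blast
qed

lemma (in cring) local_unit:
  assumes loc: "local_ring R" and x: "x \<in> carrier R" "x \<notin> max_ideal R"
  shows "\<exists>v\<in>carrier R. v \<otimes> x = \<one>"
proof -
  have id: "ideal (PIdl x) R" using cgenideal_ideal x by blast
  have "x = \<one> \<otimes> x" using x by simp
  hence "x \<in> PIdl x" unfolding cgenideal_def by blast
  hence "PIdl x = carrier R" using local_proper_sub[OF loc id] x by blast
  hence "\<one> \<in> PIdl x" by simp
  thus ?thesis unfolding cgenideal_def by auto
qed

lemma (in cring) local_one_minus:
  assumes loc: "local_ring R" and c: "c \<in> max_ideal R"
  shows "\<exists>v\<in>carrier R. v \<otimes> (\<one> \<ominus> c) = \<one>"
proof -
  have mi: "ideal (max_ideal R) R" using local_max_ideal[OF loc] .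
  have cc: "c \<in> carrier R" using c mi ideal_sub by blast
  have "\<one> \<ominus> c \<notin> max_ideal R"
  proof
    assume "\<one> \<ominus> c \<in> max_ideal R"
    hence "(\<one> \<ominus> c) \<oplus> c \<in> max_ideal R" using c mi
      by (simp add: additive_subgroup.a_closed ideal.axioms(1))
    moreover have "(\<one> \<ominus> c) \<oplus> c = \<one>" using cc by algebra
    ultimately show False using local_one_notin[OF loc] by simp
  qed
  thus ?thesis using local_unit[OF loc] cc by blast
qed

lemma (in cring) unit_cancel:
  assumes "ideal I R" "u \<in> carrier R" "y \<in> carrier R" "v \<in> carrier R" "v \<otimes> u = \<one>" "u \<otimes> y \<in> I"
  shows "y \<in> I"
proof -
  have "v \<otimes> (u \<otimes> y) \<in> I" using assms(1,6,4) by (rule ideal.I_l_closed)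
  moreover have "v \<otimes> (u \<otimes> y) = (v \<otimes> u) \<otimes> y" using assms(2-4) by (simp add: m_assoc)
  moreover have "(v \<otimes> u) \<otimes> y = y" using assms(3,5) by simp
  ultimately show ?thesis by simp
qed

section \<open>Finiteness of lengths\<close>

lemma (in cring) len_finite_aux:
  assumes loc: "local_ring R" and G: "finite G" "G \<subseteq> carrier R" "max_ideal R = Idl G"
  shows "ideal q R \<Longrightarrow> (\<forall>y\<in>G. y [^] (e y :: nat) \<in> q) \<Longrightarrow> sum e G \<le> N \<Longrightarrow> \<exists>k. len R q (carrier R) = enat k"
proof (induction N arbitrary: q e rule: less_induct)
  case (less N)
  note q = less.prems(1)
  show ?case
  proof (cases "G \<subseteq> q")
    case True
    hence mq: "max_ideal R \<subseteq> q" using G genideal_minimal q by simp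
    have mx: "maximalideal (max_ideal R) R" using local_max[OF loc] .
    have "len R q (carrier R) \<le> enat 1"
    proof (rule len_least)
      fix n C assume c: "ischain R q (carrier R) n C"
      show "enat n \<le> enat 1"
      proof (rule ccontr)
        assume "\<not> enat n \<le> enat 1"
        hence n: "2 \<le> n" by simp
        have cs: "\<forall>i<n. C i \<subset> C (Suc i)" and ci: "\<forall>i\<le>n. ideal (C i) R \<and> q \<subseteq> C i \<and> C i \<subseteq> carrier R"
          using c unfolding ischain_def by auto
        have c0: "q \<subseteq> C 0" "C 0 \<subset> C 1" "C 1 \<subset> C (Suc 1)" "ideal (C 1) R" "C (Suc 1) \<subseteq> carrier R"
          using cs[rule_format, of 0] cs[rule_format, of 1] ci[rule_format, of 0] ci[rule_format, of 1]
            ci[rule_format, of "Suc 1"] n by auto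
        have "C 1 = max_ideal R \<or> C 1 = carrier R"
          using maximalideal.I_maximal[OF mx c0(4)] c0 mq ideal_sub by blast
        thus False using c0 mq by auto
      qed
    qed
    thus ?thesis using enat_ile by blast
  next
    case False
    then obtain y where y: "y \<in> G" "y \<notin> q" by blast
    have yc: "y \<in> carrier R" using y G by blast
    have ey: "2 \<le> e y"
    proof (rule ccontr)
      assume "\<not> 2 \<le> e y"
      hence "e y = 0 \<or> e y = 1" by auto
      moreover have "y [^] e y \<in> q" using less.prems(2) y by blast
      ultimately have "\<one> \<in> q \<or> y \<in> q" using yc by auto
      thus False using y q ideal.one_imp_carrier yc by blast
    qed
    define e1 where "e1 = e(y := 1)"
    define e2 where "e2 = e(y := e y - 1)"
    define q1 where "q1 = q <+>\<^bsub>R\<^esub> PIdl y"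
    define q2 where "q2 = colon R q y"
    have q1i: "ideal q1 R" unfolding q1_def using sum_PIdl_ideal q yc by blast
    have q2i: "ideal q2 R" unfolding q2_def using colon_ideal q yc by blast
    have s0: "sum e G = e y + sum e (G - {y})" by (rule sum.remove[OF G(1) y(1)])
    have r1: "sum e1 (G - {y}) = sum e (G - {y})" unfolding e1_def by (rule sum.cong) auto
    have r2: "sum e2 (G - {y}) = sum e (G - {y})" unfolding e2_def by (rule sum.cong) auto
    have s1: "sum e1 G = 1 + sum e (G - {y})"
      using sum.remove[OF G(1) y(1), of e1] r1 unfolding e1_def by simp
    have s2: "sum e2 G = (e y - 1) + sum e (G - {y})"
      using sum.remove[OF G(1) y(1), of e2] r2 unfolding e2_def by simp
    have p1: "\<forall>z\<in>G. z [^] (e1 z) \<in> q1"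
    proof
      fix z assume z: "z \<in> G"
      show "z [^] (e1 z) \<in> q1"
      proof (cases "z = y")
        case True thus ?thesis unfolding e1_def q1_def using sum_PIdl_sup(2)[OF q yc] yc by simp
      next
        case False thus ?thesis unfolding e1_def q1_def using sum_PIdl_sup(1)[OF q yc] less.prems(2) z by auto
      qed
    qed
    have p2: "\<forall>z\<in>G. z [^] (e2 z) \<in> q2"
    proof
      fix z assume z: "z \<in> G"
      show "z [^] (e2 z) \<in> q2"
      proof (cases "z = y")
        case True
        have "y [^] (e y - 1) \<otimes> y = y [^] (Suc (e y - 1))" by simp
        also have "\<dots> = y [^] e y" using ey by (simp add: Suc_diff_1)
        finally have "y [^] (e y - 1) \<otimes> y \<in> q" using less.prems(2) y by simp
        thus ?thesis unfolding e2_def q2_def colon_def using True yc by simp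
      next
        case False thus ?thesis unfolding e2_def q2_def using colon_sup[OF q yc] less.prems(2) z by auto
      qed
    qed
    have lt1: "sum e1 G < N" using s0 s1 ey less.prems(3) by linarith
    have lt2: "sum e2 G < N" using s0 s2 ey less.prems(3) by linarith
    obtain k1 where k1: "len R q1 (carrier R) = enat k1"
      using less.IH[OF lt1 q1i p1 order_refl] by blast
    obtain k2 where k2: "len R q2 (carrier R) = enat k2"
      using less.IH[OF lt2 q2i p2 order_refl] by blast
    have "len R q (carrier R) \<le> enat (k1 + k2)"
      using len_split[OF q yc] k1 k2 unfolding q1_def q2_def by simp
    thus ?thesis using enat_ile by blast
  qed
qed

lemma noeth_local: "noeth_local_ring B \<Longrightarrow> local_ring B" and noeth_cring: "noeth_local_ring B \<Longrightarrow> cring B"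
  unfolding noeth_local_ring_def local_ring_def by auto

lemma (in cring) len_finite:
  assumes nl: "noeth_local_ring R" and q: "ideal q R"
    and rad: "\<forall>x\<in>max_ideal R. \<exists>e::nat. x [^] e \<in> q"
  shows "\<exists>k. len R q (carrier R) = enat k"
proof -
  have loc: "local_ring R" using noeth_local[OF nl] .
  obtain G where G: "finite G" "G \<subseteq> carrier R" "max_ideal R = Idl G"
    using nl local_max_ideal[OF loc] unfolding noeth_local_ring_def noetherian_ring_def by blast
  have "G \<subseteq> max_ideal R" using G genideal_self by simp
  hence "\<forall>y\<in>G. \<exists>e::nat. y [^] e \<in> q" using rad by blast
  from bchoice[OF this] obtain e where e: "\<forall>y\<in>G. y [^] (e y :: nat) \<in> q" by blast
  show ?thesis using len_finite_aux[OF loc G q e order_refl] .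
qed



section \<open>Finite sums and generated ideals\<close>

lemma (in cring) finsum_lessThan_Suc:
  assumes "\<And>i. i < Suc n \<Longrightarrow> f i \<in> carrier R"
  shows "finsum R f {..<Suc n} = f n \<oplus> finsum R f {..<n}"
proof -
  have "{..<Suc n} = insert n {..<n}" by auto
  moreover have "f \<in> {..<n} \<rightarrow> carrier R" using assms by auto
  moreover have "f n \<in> carrier R" using assms by auto
  ultimately show ?thesis by (simp add: finsum_insert)
qed

lemma (in cring) finsum_in_ideal:
  assumes I: "ideal I R"
  shows "\<forall>i<(k::nat). f i \<in> I \<Longrightarrow> finsum R f {..<k} \<in> I"
proof (induction k)
  case 0
  show ?case using I by (simp add: additive_subgroup.zero_closed ideal.axioms(1))
next
  case (Suc k)
  have fc: "\<And>i. i < Suc k \<Longrightarrow> f i \<in> carrier R" using Suc.prems I ideal_sub by blast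
  have "finsum R f {..<Suc k} = f k \<oplus> finsum R f {..<k}" by (rule finsum_lessThan_Suc[OF fc])
  moreover have "f k \<in> I" using Suc.prems by simp
  moreover have "finsum R f {..<k} \<in> I" using Suc.IH Suc.prems by simp
  ultimately show ?case using I by (simp add: additive_subgroup.a_closed ideal.axioms(1))
qed

definition lcs :: "('a, 'm) ring_scheme \<Rightarrow> 'a set \<Rightarrow> 'a set" where
  "lcs R W = {z. \<exists>(k::nat) u s. (\<forall>i<k. u i \<in> W \<and> s i \<in> carrier R) \<and> z = finsum R (\<lambda>i. u i \<otimes>\<^bsub>R\<^esub> s i) {..<k}}"

lemma lcs_intro:
  assumes "\<forall>i<(k::nat). u i \<in> W \<and> s i \<in> carrier R"
  shows "finsum R (\<lambda>i. u i \<otimes>\<^bsub>R\<^esub> s i) {..<k} \<in> lcs R W"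
  unfolding lcs_def
  by (rule CollectI, rule exI[of _ k], rule exI[of _ u], rule exI[of _ s]) (simp add: assms)

lemma (in cring) lc_closed:
  assumes "W \<subseteq> carrier R" "\<forall>i<k. u i \<in> W \<and> s i \<in> carrier R" "i < k"
  shows "u i \<otimes> s i \<in> carrier R" "u i \<in> carrier R" "s i \<in> carrier R"
proof -
  have "u i \<in> W" "s i \<in> carrier R" using assms(2,3) by auto
  thus "u i \<in> carrier R" "s i \<in> carrier R" "u i \<otimes> s i \<in> carrier R" using assms(1) by auto
qed

lemma (in cring) lcs_carrier:
  assumes W: "W \<subseteq> carrier R" shows "lcs R W \<subseteq> carrier R"
proof
  fix z assume "z \<in> lcs R W"
  then obtain k :: nat and u s where us: "\<forall>i<k. u i \<in> W \<and> s i \<in> carrier R" "z = finsum R (\<lambda>i. u i \<otimes> s i) {..<k}"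
    unfolding lcs_def by blast
  have "(\<lambda>i. u i \<otimes> s i) \<in> {..<k} \<rightarrow> carrier R" using lc_closed[OF W us(1)] by auto
  thus "z \<in> carrier R" using us(2) finsum_closed by simp
qed

lemma (in cring) lcs_extend:
  assumes W: "W \<subseteq> carrier R" and z: "z \<in> lcs R W" and a: "a \<in> W" and b: "b \<in> carrier R"
  shows "z \<oplus> a \<otimes> b \<in> lcs R W"
proof -
  obtain k :: nat and u s where us: "\<forall>i<k. u i \<in> W \<and> s i \<in> carrier R" "z = finsum R (\<lambda>i. u i \<otimes> s i) {..<k}"
    using z unfolding lcs_def by blast
  define u' where "u' = u(k := a)"
  define s' where "s' = s(k := b)"
  have us': "\<forall>i<Suc k. u' i \<in> W \<and> s' i \<in> carrier R" using us a b unfolding u'_def s'_def by auto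
  have fc: "\<And>i. i < Suc k \<Longrightarrow> u' i \<otimes> s' i \<in> carrier R" using lc_closed[OF W us'] by blast
  have "finsum R (\<lambda>i. u' i \<otimes> s' i) {..<Suc k} = u' k \<otimes> s' k \<oplus> finsum R (\<lambda>i. u' i \<otimes> s' i) {..<k}"
    by (rule finsum_lessThan_Suc[OF fc])
  also have "finsum R (\<lambda>i. u' i \<otimes> s' i) {..<k} = z"
    unfolding us(2) by (rule finsum_cong') (use lc_closed[OF W us(1)] in \<open>auto simp: u'_def s'_def\<close>)
  also have "u' k \<otimes> s' k \<oplus> z = z \<oplus> a \<otimes> b"
  proof -
    have ac: "a \<otimes> b \<in> carrier R" using a b W by blast
    have zc: "z \<in> carrier R" using lcs_carrier[OF W] z by blast
    have "u' k \<otimes> s' k = a \<otimes> b" unfolding u'_def s'_def by simp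
    thus ?thesis using a_comm[OF ac zc] by simp
  qed
  finally have "finsum R (\<lambda>i. u' i \<otimes> s' i) {..<Suc k} = z \<oplus> a \<otimes> b" .
  with lcs_intro[OF us'] show ?thesis by simp
qed

lemma (in cring) lcs_zero: "\<zero> \<in> lcs R W"
  unfolding lcs_def by (rule CollectI, rule exI[of _ 0]) simp

lemma (in cring) lcs_add:
  assumes W: "W \<subseteq> carrier R" and z: "z \<in> lcs R W" and w: "w \<in> lcs R W"
  shows "z \<oplus> w \<in> lcs R W"
proof -
  obtain k :: nat and u s where us: "\<forall>i<k. u i \<in> W \<and> s i \<in> carrier R" "w = finsum R (\<lambda>i. u i \<otimes> s i) {..<k}"
    using w unfolding lcs_def by blast
  have "\<forall>j\<le>k. z \<oplus> finsum R (\<lambda>i. u i \<otimes> s i) {..<j} \<in> lcs R W"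
  proof (intro allI impI)
    fix j assume "j \<le> k"
    thus "z \<oplus> finsum R (\<lambda>i. u i \<otimes> s i) {..<j} \<in> lcs R W"
    proof (induction j)
      case 0 thus ?case using z lcs_carrier[OF W] by auto
    next
      case (Suc j)
      have fc: "\<And>i. i < Suc j \<Longrightarrow> u i \<otimes> s i \<in> carrier R" using lc_closed[OF W us(1)] Suc.prems by auto
      have c1: "u j \<otimes> s j \<in> carrier R" using fc by simp
      have c2: "finsum R (\<lambda>i. u i \<otimes> s i) {..<j} \<in> carrier R"
        by (rule finsum_closed) (use fc in auto)
      have zc: "z \<in> carrier R" using z lcs_carrier[OF W] by blast
      have "z \<oplus> finsum R (\<lambda>i. u i \<otimes> s i) {..<Suc j} = (z \<oplus> finsum R (\<lambda>i. u i \<otimes> s i) {..<j}) \<oplus> u j \<otimes> s j"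
        using finsum_lessThan_Suc[OF fc] c1 c2 zc by (simp add: a_ac)
      moreover have "(z \<oplus> finsum R (\<lambda>i. u i \<otimes> s i) {..<j}) \<oplus> u j \<otimes> s j \<in> lcs R W"
        by (rule lcs_extend[OF W]) (use Suc us in auto)
      ultimately show ?case by simp
    qed
  qed
  thus ?thesis using us(2) by blast
qed

lemma (in cring) lcs_mult:
  assumes W: "W \<subseteq> carrier R" and z: "z \<in> lcs R W" and x: "x \<in> carrier R"
  shows "x \<otimes> z \<in> lcs R W"
proof -
  obtain k :: nat and u s where us: "\<forall>i<k. u i \<in> W \<and> s i \<in> carrier R" "z = finsum R (\<lambda>i. u i \<otimes> s i) {..<k}"
    using z unfolding lcs_def by blast
  have "x \<otimes> z = finsum R (\<lambda>i. x \<otimes> (u i \<otimes> s i)) {..<k}"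
    unfolding us(2) by (rule finsum_rdistr) (use lc_closed[OF W us(1)] x in auto)
  also have "\<dots> = finsum R (\<lambda>i. u i \<otimes> (x \<otimes> s i)) {..<k}"
    by (rule finsum_cong') (use lc_closed[OF W us(1)] x in \<open>auto simp: m_lcomm\<close>)
  finally show ?thesis using lcs_intro[of k u W "\<lambda>i. x \<otimes> s i" R] us x by simp
qed

lemma (in cring) lcs_ideal:
  assumes W: "W \<subseteq> carrier R" shows "ideal (lcs R W) R"
  by (rule idealI_simple) (use lcs_carrier[OF W] lcs_zero lcs_add[OF W] lcs_mult[OF W] in auto)

lemma (in cring) genideal_lcs:
  assumes W: "W \<subseteq> carrier R" shows "Idl W \<subseteq> lcs R W"
proof (rule genideal_minimal[OF lcs_ideal[OF W]])
  show "W \<subseteq> lcs R W"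
  proof
    fix x assume x: "x \<in> W"
    have "\<zero> \<oplus> x \<otimes> \<one> \<in> lcs R W" by (rule lcs_extend[OF W lcs_zero x one_closed])
    thus "x \<in> lcs R W" using x W by auto
  qed
qed

lemma genideal_image:
  assumes A: "cring A" and B: "cring B" and g: "g \<in> ring_hom A B" and W: "W \<subseteq> carrier A"
  shows "Idl\<^bsub>B\<^esub> (g ` (Idl\<^bsub>A\<^esub> W)) = Idl\<^bsub>B\<^esub> (g ` W)"
proof -
  interpret A: cring A by (rule A)
  interpret B: cring B by (rule B)
  have hh: "ring_hom_ring A B g" by (rule ring_hom_ringI2[OF A.ring_axioms B.ring_axioms g])
  have gX: "g ` W \<subseteq> carrier B" using W ring_hom_closed[OF g] by blast
  have iB: "ideal (Idl\<^bsub>B\<^esub> (g ` W)) B" by (rule B.genideal_ideal[OF gX])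
  have P: "ideal {r \<in> carrier A. g r \<in> Idl\<^bsub>B\<^esub> (g ` W)} A" by (rule ring_hom_ring.ideal_vimage[OF hh iB])
  have "W \<subseteq> {r \<in> carrier A. g r \<in> Idl\<^bsub>B\<^esub> (g ` W)}" using W B.genideal_self[OF gX] by auto
  hence "Idl\<^bsub>A\<^esub> W \<subseteq> {r \<in> carrier A. g r \<in> Idl\<^bsub>B\<^esub> (g ` W)}" by (rule A.genideal_minimal[OF P])
  hence sub1: "g ` (Idl\<^bsub>A\<^esub> W) \<subseteq> Idl\<^bsub>B\<^esub> (g ` W)" by blast
  have IA: "Idl\<^bsub>A\<^esub> W \<subseteq> carrier A" using ideal_sub[OF A.genideal_ideal[OF W]] .
  have gIA: "g ` (Idl\<^bsub>A\<^esub> W) \<subseteq> carrier B" using IA ring_hom_closed[OF g] by blast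
  have "g ` W \<subseteq> g ` (Idl\<^bsub>A\<^esub> W)" using A.genideal_self[OF W] by blast
  hence sub2: "Idl\<^bsub>B\<^esub> (g ` W) \<subseteq> Idl\<^bsub>B\<^esub> (g ` (Idl\<^bsub>A\<^esub> W))"
    by (rule B.subset_Idl_subset[OF gIA])
  show ?thesis using B.genideal_minimal[OF iB sub1] sub2 by blast
qed



lemma (in cring) socle:
  assumes loc: "local_ring R" and I: "ideal I R" "I \<noteq> carrier R" and k: "len R I (carrier R) = enat k"
  shows "\<exists>y\<in>carrier R. y \<notin> I \<and> (\<forall>a\<in>max_ideal R. a \<otimes> y \<in> I)"
proof -
  define P where "P n \<longleftrightarrow> (\<exists>y\<in>carrier R. y \<notin> I \<and> len R (I <+>\<^bsub>R\<^esub> PIdl y) (carrier R) = enat n)" for n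
  have fin: "\<exists>n. len R (I <+>\<^bsub>R\<^esub> PIdl y) (carrier R) = enat n \<and> n \<le> k" if y: "y \<in> carrier R" for y
  proof -
    have "len R (I <+>\<^bsub>R\<^esub> PIdl y) (carrier R) \<le> len R I (carrier R)"
      by (rule len_mono[OF sum_PIdl_sup(1)[OF I(1) y] order_refl])
    hence le: "len R (I <+>\<^bsub>R\<^esub> PIdl y) (carrier R) \<le> enat k" using k by simp
    then obtain n where n: "len R (I <+>\<^bsub>R\<^esub> PIdl y) (carrier R) = enat n" using enat_ile by blast
    hence "n \<le> k" using le by simp
    thus ?thesis using n by blast
  qed
  have one_notin: "\<one> \<notin> I" using I ideal.one_imp_carrier by blast
  obtain n1 where "len R (I <+>\<^bsub>R\<^esub> PIdl \<one>) (carrier R) = enat n1" using fin[OF one_closed] by blast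
  hence Pn1: "P n1" unfolding P_def using one_notin one_closed by blast
  have Pbd: "P n \<Longrightarrow> n \<le> k" for n
  proof -
    assume "P n"
    then obtain y where y: "y \<in> carrier R" "len R (I <+>\<^bsub>R\<^esub> PIdl y) (carrier R) = enat n" unfolding P_def by blast
    from fin[OF y(1)] y(2) show "n \<le> k" by auto
  qed
  have finP: "finite {n. P n}" by (rule finite_subset[of _ "{..k}"]) (use Pbd in auto)
  define n0 where "n0 = Max {n. P n}"
  have "P n0" unfolding n0_def using Max_in[OF finP] Pn1 by blast
  then obtain y0 where y0: "y0 \<in> carrier R" "y0 \<notin> I" "len R (I <+>\<^bsub>R\<^esub> PIdl y0) (carrier R) = enat n0"
    unfolding P_def by blast
  have "\<forall>a\<in>max_ideal R. a \<otimes> y0 \<in> I"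
  proof
    fix a assume a: "a \<in> max_ideal R"
    have mi: "ideal (max_ideal R) R" using local_max_ideal[OF loc] .
    have ac: "a \<in> carrier R" using a ideal_sub[OF mi] by blast
    show "a \<otimes> y0 \<in> I"
    proof (rule ccontr)
      assume na: "a \<otimes> y0 \<notin> I"
      define y1 where "y1 = a \<otimes> y0"
      have y1c: "y1 \<in> carrier R" unfolding y1_def using ac y0(1) by simp
      obtain n1 where n1: "len R (I <+>\<^bsub>R\<^esub> PIdl y1) (carrier R) = enat n1" using fin[OF y1c] by blast
      hence "P n1" unfolding P_def using y1c na y1_def by blast
      hence n1n0: "n1 \<le> n0" unfolding n0_def using Max_ge[OF finP] by blast
      have I1: "ideal (I <+>\<^bsub>R\<^esub> PIdl y1) R" by (rule sum_PIdl_ideal[OF I(1) y1c])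
      have I0: "ideal (I <+>\<^bsub>R\<^esub> PIdl y0) R" by (rule sum_PIdl_ideal[OF I(1) y0(1)])
      have sub: "I <+>\<^bsub>R\<^esub> PIdl y1 \<subseteq> I <+>\<^bsub>R\<^esub> PIdl y0"
      proof
        fix z assume "z \<in> I <+>\<^bsub>R\<^esub> PIdl y1"
        then obtain i b where ib: "i \<in> I" "b \<in> carrier R" "z = i \<oplus> b \<otimes> y1" using mem_sum_PIdl by blast
        have "b \<otimes> y1 = (b \<otimes> a) \<otimes> y0" unfolding y1_def using ib(2) ac y0(1) by (simp add: m_assoc)
        hence "z = i \<oplus> (b \<otimes> a) \<otimes> y0" using ib(3) by simp
        moreover have "b \<otimes> a \<in> carrier R" using ib(2) ac by simp
        ultimately show "z \<in> I <+>\<^bsub>R\<^esub> PIdl y0" using ib(1) mem_sum_PIdl by blast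
      qed
      have "y0 \<notin> I <+>\<^bsub>R\<^esub> PIdl y1"
      proof
        assume "y0 \<in> I <+>\<^bsub>R\<^esub> PIdl y1"
        then obtain i b where ib: "i \<in> I" "b \<in> carrier R" "y0 = i \<oplus> b \<otimes> y1" using mem_sum_PIdl by blast
        have ic: "i \<in> carrier R" using ib(1) ideal_sub[OF I(1)] by blast
        define t where "t = b \<otimes> (a \<otimes> y0)"
        have tc: "t \<in> carrier R" unfolding t_def using ib(2) ac y0(1) by simp
        have h: "y0 = i \<oplus> t" using ib(3) unfolding t_def y1_def .
        have e1: "(\<one> \<ominus> b \<otimes> a) \<otimes> y0 = y0 \<ominus> t" unfolding t_def using ib(2) ac y0(1) by algebra
        have e2: "y0 \<ominus> t = (i \<oplus> t) \<ominus> t" using h by simp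
        have e3: "(i \<oplus> t) \<ominus> t = i" using ic tc by algebra
        have ui: "(\<one> \<ominus> b \<otimes> a) \<otimes> y0 \<in> I" using e1 e2 e3 ib(1) by simp
        have "b \<otimes> a \<in> max_ideal R" by (rule ideal.I_l_closed[OF mi a ib(2)])
        then obtain v where v: "v \<in> carrier R" "v \<otimes> (\<one> \<ominus> b \<otimes> a) = \<one>" using local_one_minus[OF loc] by blast
        have "y0 \<in> I" by (rule unit_cancel[OF I(1) _ y0(1) v ui]) (use ib(2) ac in simp)
        thus False using y0(2) by simp
      qed
      moreover have "y0 \<in> I <+>\<^bsub>R\<^esub> PIdl y0" by (rule sum_PIdl_sup(2)[OF I(1) y0(1)])
      ultimately have strict: "I <+>\<^bsub>R\<^esub> PIdl y1 \<subset> I <+>\<^bsub>R\<^esub> PIdl y0" using sub by blast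
      obtain k' where "k' < n1" "len R (I <+>\<^bsub>R\<^esub> PIdl y0) (carrier R) = enat k'"
        using len_strict[OF I1 I0 strict ideal_sub[OF I0] oneideal n1] by blast
      hence "n0 < n1" using y0(3) by simp
      thus False using n1n0 by simp
    qed
  qed
  thus ?thesis using y0 by blast
qed

lemma comp_bound:
  assumes A: "local_ring A" and B: "cring B" and g: "g \<in> ring_hom A B"
  shows "ideal I A \<Longrightarrow> len A I (carrier A) = enat k \<Longrightarrow>
     len B (Idl\<^bsub>B\<^esub> (g ` I)) (carrier B) \<le> enat k * len B (Idl\<^bsub>B\<^esub> (g ` max_ideal A)) (carrier B)"
proof (induction k arbitrary: I rule: less_induct)
  case (less k)
  interpret A: cring A using local_cring[OF A] .
  interpret B: cring B by (rule B)
  let ?c = "len B (Idl\<^bsub>B\<^esub> (g ` max_ideal A)) (carrier B)"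
  note I = less.prems(1) and kI = less.prems(2)
  have gI: "g ` I \<subseteq> carrier B" using ideal_sub[OF I] ring_hom_closed[OF g] by blast
  let ?K = "Idl\<^bsub>B\<^esub> (g ` I)"
  have K: "ideal ?K B" by (rule B.genideal_ideal[OF gI])
  show ?case
  proof (cases "I = carrier A")
    case True
    have "g \<one>\<^bsub>A\<^esub> \<in> g ` I" using True A.one_closed by blast
    hence "\<one>\<^bsub>B\<^esub> \<in> g ` I" using ring_hom_one[OF g] by simp
    hence "\<one>\<^bsub>B\<^esub> \<in> ?K" using B.genideal_self[OF gI] by blast
    hence "?K = carrier B" by (rule ideal.one_imp_carrier[OF K])
    thus ?thesis using len_top_zero[of B] by simp
  next
    case False
    obtain y where y: "y \<in> carrier A" "y \<notin> I" "\<forall>a\<in>max_ideal A. a \<otimes>\<^bsub>A\<^esub> y \<in> I"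
      using A.socle[OF A I False kI] by blast
    let ?I1 = "I <+>\<^bsub>A\<^esub> PIdl\<^bsub>A\<^esub> y"
    have I1: "ideal ?I1 A" by (rule A.sum_PIdl_ideal[OF I y(1)])
    have II1: "I \<subset> ?I1" using A.sum_PIdl_sup[OF I y(1)] y(2) by blast
    obtain k1 where k1: "k1 < k" "len A ?I1 (carrier A) = enat k1"
      using len_strict[OF I I1 II1 ideal_sub[OF I1] A.oneideal kI] by blast
    have IH: "len B (Idl\<^bsub>B\<^esub> (g ` ?I1)) (carrier B) \<le> enat k1 * ?c" using less.IH[OF k1(1) I1 k1(2)] .
    have gy: "g y \<in> carrier B" using ring_hom_closed[OF g y(1)] .
    have split: "len B ?K (carrier B) \<le> len B (?K <+>\<^bsub>B\<^esub> PIdl\<^bsub>B\<^esub> (g y)) (carrier B) + len B (colon B ?K (g y)) (carrier B)"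
      by (rule B.len_split[OF K gy])
    have gI1: "g ` ?I1 \<subseteq> ?K <+>\<^bsub>B\<^esub> PIdl\<^bsub>B\<^esub> (g y)"
    proof
      fix z assume "z \<in> g ` ?I1"
      then obtain w where w: "w \<in> ?I1" "z = g w" by blast
      then obtain i b where ib: "i \<in> I" "b \<in> carrier A" "w = i \<oplus>\<^bsub>A\<^esub> b \<otimes>\<^bsub>A\<^esub> y" using A.mem_sum_PIdl by blast
      have ic: "i \<in> carrier A" using ib(1) ideal_sub[OF I] by blast
      have "z = g i \<oplus>\<^bsub>B\<^esub> g b \<otimes>\<^bsub>B\<^esub> g y"
        using w(2) ib(3) ic ib(2) y(1) by (simp add: ring_hom_add[OF g] ring_hom_mult[OF g])
      moreover have "g i \<in> ?K" using ib(1) B.genideal_self[OF gI] by blast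
      moreover have "g b \<in> carrier B" using ring_hom_closed[OF g ib(2)] .
      ultimately show "z \<in> ?K <+>\<^bsub>B\<^esub> PIdl\<^bsub>B\<^esub> (g y)" using B.mem_sum_PIdl by blast
    qed
    have sub1: "Idl\<^bsub>B\<^esub> (g ` ?I1) \<subseteq> ?K <+>\<^bsub>B\<^esub> PIdl\<^bsub>B\<^esub> (g y)"
      by (rule B.genideal_minimal[OF B.sum_PIdl_ideal[OF K gy] gI1])
    have l1: "len B (?K <+>\<^bsub>B\<^esub> PIdl\<^bsub>B\<^esub> (g y)) (carrier B) \<le> len B (Idl\<^bsub>B\<^esub> (g ` ?I1)) (carrier B)"
      by (rule len_mono[OF sub1 order_refl])
    have mA: "max_ideal A \<subseteq> carrier A" using ideal_sub[OF local_max_ideal[OF A]] .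
    have gm: "g ` max_ideal A \<subseteq> colon B ?K (g y)"
    proof
      fix z assume "z \<in> g ` max_ideal A"
      then obtain a where a: "a \<in> max_ideal A" "z = g a" by blast
      have ac: "a \<in> carrier A" using a(1) mA by blast
      have "g a \<otimes>\<^bsub>B\<^esub> g y = g (a \<otimes>\<^bsub>A\<^esub> y)" using ring_hom_mult[OF g ac y(1)] by simp
      moreover have "a \<otimes>\<^bsub>A\<^esub> y \<in> I" using y(3) a(1) by blast
      ultimately have "g a \<otimes>\<^bsub>B\<^esub> g y \<in> ?K" using B.genideal_self[OF gI] by blast
      thus "z \<in> colon B ?K (g y)" unfolding colon_def using a(2) ring_hom_closed[OF g ac] by simp
    qed
    have sub2: "Idl\<^bsub>B\<^esub> (g ` max_ideal A) \<subseteq> colon B ?K (g y)"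
      by (rule B.genideal_minimal[OF B.colon_ideal[OF K gy] gm])
    have l2: "len B (colon B ?K (g y)) (carrier B) \<le> ?c" by (rule len_mono[OF sub2 order_refl])
    have "len B ?K (carrier B) \<le> enat k1 * ?c + ?c"
      using split add_mono[OF order_trans[OF l1 IH] l2] by (rule order_trans)
    also have "enat k1 * ?c + ?c = enat (Suc k1) * ?c"
    proof -
      have "enat (Suc k1) = enat k1 + 1" by (simp add: one_enat_def)
      hence "enat (Suc k1) * ?c = enat k1 * ?c + 1 * ?c" by (simp only: distrib_right)
      thus ?thesis by simp
    qed
    also have "\<dots> \<le> enat k * ?c" using k1(1) by (intro mult_right_mono) simp_all
    finally show ?thesis .
  qed
qed



lemma ff_strict:
  assumes A: "local_ring A" and B: "local_ring B" and g: "g \<in> ring_hom A B"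
    and gm: "g ` max_ideal A \<subseteq> max_ideal B" and fl: "flat_hom A B g"
    and J: "ideal J A" and J': "ideal J' A" and JJ: "J \<subset> J'"
  shows "Idl\<^bsub>B\<^esub> (g ` J) \<subset> Idl\<^bsub>B\<^esub> (g ` J')"
proof -
  interpret A: cring A using local_cring[OF A] .
  interpret B: cring B using local_cring[OF B] .
  have gJ: "g ` J \<subseteq> carrier B" using ideal_sub[OF J] ring_hom_closed[OF g] by blast
  have gJ': "g ` J' \<subseteq> carrier B" using ideal_sub[OF J'] ring_hom_closed[OF g] by blast
  have "g ` J \<subseteq> g ` J'" using JJ by blast
  hence sub: "Idl\<^bsub>B\<^esub> (g ` J) \<subseteq> Idl\<^bsub>B\<^esub> (g ` J')" by (rule B.subset_Idl_subset[OF gJ'])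
  obtain x where x: "x \<in> J'" "x \<notin> J" using JJ by blast
  have xc: "x \<in> carrier A" using x(1) ideal_sub[OF J'] by blast
  have "Idl\<^bsub>B\<^esub> (g ` J) \<noteq> Idl\<^bsub>B\<^esub> (g ` J')"
  proof
    assume eq: "Idl\<^bsub>B\<^esub> (g ` J) = Idl\<^bsub>B\<^esub> (g ` J')"
    have "g x \<in> g ` J'" using x(1) by blast
    hence "g x \<in> Idl\<^bsub>B\<^esub> (g ` J')" using B.genideal_self[OF gJ'] by blast
    hence "g x \<in> lcs B (g ` J)" using eq B.genideal_lcs[OF gJ] by blast
    then obtain k :: nat and u s where us: "\<forall>i<k. u i \<in> g ` J \<and> s i \<in> carrier B"
      "g x = finsum B (\<lambda>i. u i \<otimes>\<^bsub>B\<^esub> s i) {..<k}"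
      unfolding lcs_def by blast
    have "\<forall>i. \<exists>r. i < k \<longrightarrow> r \<in> J \<and> u i = g r" using us(1) by blast
    from choice[OF this] obtain r where r: "\<forall>i. i < k \<longrightarrow> r i \<in> J \<and> u i = g (r i)" by blast
    have rJ: "\<And>i. i < k \<Longrightarrow> r i \<in> J" and ur: "\<And>i. i < k \<Longrightarrow> u i = g (r i)" using r by auto
    have rc: "\<And>i. i < k \<Longrightarrow> r i \<in> carrier A" using rJ ideal_sub[OF J] by blast
    have sc: "\<And>i. i < k \<Longrightarrow> s i \<in> carrier B" using us(1) by blast
    have uc: "\<And>i. i < k \<Longrightarrow> u i \<in> carrier B" using ur rc ring_hom_closed[OF g] by simp
    define rr where "rr i = (if i < k then r i else x)" for i
    define xx where "xx i = (if i < k then \<ominus>\<^bsub>B\<^esub> s i else \<one>\<^bsub>B\<^esub>)" for i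
    have rrc: "\<And>i. rr i \<in> carrier A" unfolding rr_def using rc xc by simp
    have xxc: "\<And>i. i < Suc k \<Longrightarrow> xx i \<in> carrier B" unfolding xx_def using sc by simp
    have gxc: "g x \<in> carrier B" using ring_hom_closed[OF g xc] .
    have rel: "finsum B (\<lambda>i. g (rr i) \<otimes>\<^bsub>B\<^esub> xx i) {..<Suc k} = \<zero>\<^bsub>B\<^esub>"
    proof -
      have fc: "\<And>i. i < Suc k \<Longrightarrow> g (rr i) \<otimes>\<^bsub>B\<^esub> xx i \<in> carrier B"
        using rrc xxc ring_hom_closed[OF g] by simp
      have "finsum B (\<lambda>i. g (rr i) \<otimes>\<^bsub>B\<^esub> xx i) {..<Suc k}
          = g (rr k) \<otimes>\<^bsub>B\<^esub> xx k \<oplus>\<^bsub>B\<^esub> finsum B (\<lambda>i. g (rr i) \<otimes>\<^bsub>B\<^esub> xx i) {..<k}"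
        by (rule B.finsum_lessThan_Suc[OF fc])
      also have "g (rr k) \<otimes>\<^bsub>B\<^esub> xx k = g x" unfolding rr_def xx_def using gxc by simp
      also have "finsum B (\<lambda>i. g (rr i) \<otimes>\<^bsub>B\<^esub> xx i) {..<k}
          = finsum B (\<lambda>i. (\<ominus>\<^bsub>B\<^esub> \<one>\<^bsub>B\<^esub>) \<otimes>\<^bsub>B\<^esub> (u i \<otimes>\<^bsub>B\<^esub> s i)) {..<k}"
      proof (rule B.finsum_cong')
        show "(\<lambda>i. (\<ominus>\<^bsub>B\<^esub> \<one>\<^bsub>B\<^esub>) \<otimes>\<^bsub>B\<^esub> (u i \<otimes>\<^bsub>B\<^esub> s i)) \<in> {..<k} \<rightarrow> carrier B"
          using uc sc by simp
        fix i assume "i \<in> {..<k}"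
        hence i: "i < k" by simp
        have "g (rr i) \<otimes>\<^bsub>B\<^esub> xx i = u i \<otimes>\<^bsub>B\<^esub> (\<ominus>\<^bsub>B\<^esub> s i)"
          unfolding rr_def xx_def using i ur by simp
        also have "\<dots> = (\<ominus>\<^bsub>B\<^esub> \<one>\<^bsub>B\<^esub>) \<otimes>\<^bsub>B\<^esub> (u i \<otimes>\<^bsub>B\<^esub> s i)"
          using uc[OF i] sc[OF i] by algebra
        finally show "g (rr i) \<otimes>\<^bsub>B\<^esub> xx i = (\<ominus>\<^bsub>B\<^esub> \<one>\<^bsub>B\<^esub>) \<otimes>\<^bsub>B\<^esub> (u i \<otimes>\<^bsub>B\<^esub> s i)" .
      qed simp
      also have "\<dots> = (\<ominus>\<^bsub>B\<^esub> \<one>\<^bsub>B\<^esub>) \<otimes>\<^bsub>B\<^esub> finsum B (\<lambda>i. u i \<otimes>\<^bsub>B\<^esub> s i) {..<k}"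
        by (rule B.finsum_rdistr[symmetric]) (use uc sc in auto)
      also have "\<dots> = (\<ominus>\<^bsub>B\<^esub> \<one>\<^bsub>B\<^esub>) \<otimes>\<^bsub>B\<^esub> g x" using us(2) by simp
      also have "g x \<oplus>\<^bsub>B\<^esub> (\<ominus>\<^bsub>B\<^esub> \<one>\<^bsub>B\<^esub>) \<otimes>\<^bsub>B\<^esub> g x = \<zero>\<^bsub>B\<^esub>" using gxc by algebra
      finally show ?thesis .
    qed
    have rrc': "rr ` {..<Suc k} \<subseteq> carrier A" using rrc by blast
    have xxc': "xx ` {..<Suc k} \<subseteq> carrier B" using xxc by blast
    obtain l :: nat and a yv where
      fl1: "yv ` {..<l} \<subseteq> carrier B" and
      fl2: "\<forall>i<Suc k. \<forall>j<l. a i j \<in> carrier A" and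
      fl3: "\<forall>i<Suc k. xx i = finsum B (\<lambda>j. g (a i j) \<otimes>\<^bsub>B\<^esub> yv j) {..<l}" and
      fl4: "\<forall>j<l. finsum A (\<lambda>i. rr i \<otimes>\<^bsub>A\<^esub> a i j) {..<Suc k} = \<zero>\<^bsub>A\<^esub>"
      using fl unfolding flat_hom_def
      apply (elim allE[of _ "Suc k"] allE[of _ rr] allE[of _ xx])
      using rrc' xxc' rel by blast
    have one_eq: "\<one>\<^bsub>B\<^esub> = finsum B (\<lambda>j. g (a k j) \<otimes>\<^bsub>B\<^esub> yv j) {..<l}"
      using fl3 unfolding xx_def by auto
    have mA: "ideal (max_ideal A) A" using local_max_ideal[OF A] .
    have mB: "ideal (max_ideal B) B" using local_max_ideal[OF B] .
    have akm: "a k j \<in> max_ideal A" if j: "j < l" for j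
    proof (rule ccontr)
      assume na: "a k j \<notin> max_ideal A"
      have akc: "a k j \<in> carrier A" using fl2 j by simp
      have aic: "\<And>i. i < k \<Longrightarrow> a i j \<in> carrier A" using fl2 j by simp
      have fc: "\<And>i. i < Suc k \<Longrightarrow> rr i \<otimes>\<^bsub>A\<^esub> a i j \<in> carrier A" using rrc fl2 j by simp
      have "\<zero>\<^bsub>A\<^esub> = finsum A (\<lambda>i. rr i \<otimes>\<^bsub>A\<^esub> a i j) {..<Suc k}" using fl4 j by simp
      also have "\<dots> = rr k \<otimes>\<^bsub>A\<^esub> a k j \<oplus>\<^bsub>A\<^esub> finsum A (\<lambda>i. rr i \<otimes>\<^bsub>A\<^esub> a i j) {..<k}"
        by (rule A.finsum_lessThan_Suc[OF fc])
      finally have z: "x \<otimes>\<^bsub>A\<^esub> a k j \<oplus>\<^bsub>A\<^esub> finsum A (\<lambda>i. rr i \<otimes>\<^bsub>A\<^esub> a i j) {..<k} = \<zero>\<^bsub>A\<^esub>"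
        unfolding rr_def by simp
      have SJ: "finsum A (\<lambda>i. rr i \<otimes>\<^bsub>A\<^esub> a i j) {..<k} \<in> J"
      proof (rule A.finsum_in_ideal[OF J], intro allI impI)
        fix i assume i: "i < k"
        have "r i \<otimes>\<^bsub>A\<^esub> a i j \<in> J" by (rule ideal.I_r_closed[OF J rJ[OF i] aic[OF i]])
        thus "rr i \<otimes>\<^bsub>A\<^esub> a i j \<in> J" unfolding rr_def using i by simp
      qed
      have Sc: "finsum A (\<lambda>i. rr i \<otimes>\<^bsub>A\<^esub> a i j) {..<k} \<in> carrier A" using SJ ideal_sub[OF J] by blast
      have "x \<otimes>\<^bsub>A\<^esub> a k j = \<ominus>\<^bsub>A\<^esub> finsum A (\<lambda>i. rr i \<otimes>\<^bsub>A\<^esub> a i j) {..<k}"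
        by (rule A.sum_zero_eq_neg[OF _ Sc z]) (use xc akc in simp)
      moreover have "\<ominus>\<^bsub>A\<^esub> finsum A (\<lambda>i. rr i \<otimes>\<^bsub>A\<^esub> a i j) {..<k} \<in> J"
        using SJ J by (simp add: additive_subgroup.a_inv_closed ideal.axioms(1))
      ultimately have "x \<otimes>\<^bsub>A\<^esub> a k j \<in> J" by simp
      hence axJ: "a k j \<otimes>\<^bsub>A\<^esub> x \<in> J" using A.m_comm[OF xc akc] by simp
      obtain v where v: "v \<in> carrier A" "v \<otimes>\<^bsub>A\<^esub> a k j = \<one>\<^bsub>A\<^esub>" using A.local_unit[OF A akc na] by blast
      have "x \<in> J" by (rule A.unit_cancel[OF J akc xc v axJ])
      thus False using x(2) by simp
    qed
    have "\<one>\<^bsub>B\<^esub> \<in> max_ideal B"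
      unfolding one_eq
    proof (rule B.finsum_in_ideal[OF mB], intro allI impI)
      fix j assume j: "j < l"
      have "g (a k j) \<in> max_ideal B" using gm akm[OF j] by blast
      moreover have "yv j \<in> carrier B" using fl1 j by blast
      ultimately show "g (a k j) \<otimes>\<^bsub>B\<^esub> yv j \<in> max_ideal B" by (rule ideal.I_r_closed[OF mB])
    qed
    thus False using local_one_notin[OF B] by simp
  qed
  thus ?thesis using sub by blast
qed

lemma flat_bound:
  assumes A: "local_ring A" and B: "local_ring B" and g: "g \<in> ring_hom A B"
    and gm: "g ` max_ideal A \<subseteq> max_ideal B" and fl: "flat_hom A B g" and I: "ideal I A"
  shows "len A I (carrier A) \<le> len B (Idl\<^bsub>B\<^esub> (g ` I)) (carrier B)"
proof (rule len_map[where h = "\<lambda>J. Idl\<^bsub>B\<^esub> (g ` J)"])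
  interpret A: cring A using local_cring[OF A] .
  interpret B: cring B using local_cring[OF B] .
  fix K assume K: "ideal K A" "I \<subseteq> K" "K \<subseteq> carrier A"
  have gK: "g ` K \<subseteq> carrier B" using K(3) ring_hom_closed[OF g] by blast
  have iK: "ideal (Idl\<^bsub>B\<^esub> (g ` K)) B" by (rule B.genideal_ideal[OF gK])
  have "g ` I \<subseteq> g ` K" using K(2) by blast
  hence "Idl\<^bsub>B\<^esub> (g ` I) \<subseteq> Idl\<^bsub>B\<^esub> (g ` K)" by (rule B.subset_Idl_subset[OF gK])
  thus "ideal (Idl\<^bsub>B\<^esub> (g ` K)) B \<and> Idl\<^bsub>B\<^esub> (g ` I) \<subseteq> Idl\<^bsub>B\<^esub> (g ` K) \<and> Idl\<^bsub>B\<^esub> (g ` K) \<subseteq> carrier B"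
    using iK ideal_sub[OF iK] by blast
next
  fix K K' assume "ideal K A" "I \<subseteq> K" "K' \<subseteq> carrier A" "ideal K' A" "K \<subset> K'"
  thus "Idl\<^bsub>B\<^esub> (g ` K) \<subset> Idl\<^bsub>B\<^esub> (g ` K')" using ff_strict[OF A B g gm fl] by blast
qed


lemma subadd_mult:
  fixes u :: "nat \<Rightarrow> real"
  assumes sub: "\<And>n p. u (n + p) \<le> u n + u p"
  shows "u (q * k + r) \<le> real q * u k + u r"
proof (induction q)
  case 0 show ?case by simp
next
  case (Suc q)
  have "u (Suc q * k + r) = u (k + (q * k + r))" by (simp add: add.assoc)
  also have "\<dots> \<le> u k + u (q * k + r)" by (rule sub)
  also have "\<dots> \<le> u k + (real q * u k + u r)" using Suc.IH by simp
  finally show ?case by (simp add: algebra_simps)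
qed

lemma fekete:
  fixes u :: "nat \<Rightarrow> real"
  assumes nonneg: "\<And>n. 0 \<le> u n" and sub: "\<And>n p. u (n + p) \<le> u n + u p"
  shows "convergent (\<lambda>n. u n / real n)"
proof -
  define S where "S = (\<lambda>n. u n / real n) ` {1..}"
  define L where "L = Inf S"
  have Sne: "S \<noteq> {}" unfolding S_def by auto
  have Sbdd: "bdd_below S" unfolding S_def using nonneg by (intro bdd_belowI[of _ 0]) auto
  have low: "L \<le> u n / real n" if "1 \<le> n" for n
    unfolding L_def S_def by (rule cInf_lower) (use that Sbdd S_def in auto)
  have "(\<lambda>n. u n / real n) \<longlonglongrightarrow> L"
  proof (rule LIMSEQ_I)
    fix e :: real assume e: "0 < e"
    have "L < L + e / 2" using e by simp
    then obtain s where s: "s \<in> S" "s < L + e / 2"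
      using cInf_less_iff[OF Sne Sbdd] unfolding L_def by blast
    then obtain k where k: "1 \<le> k" "u k / real k < L + e / 2" unfolding S_def by auto
    define M where "M = Max (u ` {..<k})"
    have M: "\<And>r. r < k \<Longrightarrow> u r \<le> M" unfolding M_def by (rule Max_ge) auto
    have M0: "0 \<le> M" using M[of 0] k nonneg[of 0] by simp
    obtain N :: nat where N: "real N > 2 * M / e" using reals_Archimedean2 by blast
    show "\<exists>no. \<forall>n\<ge>no. norm (u n / real n - L) < e"
    proof (intro exI allI impI)
      fix n assume n: "max 1 (Suc N) \<le> n"
      hence n1: "1 \<le> n" and nN: "real n > 2 * M / e" using N by auto
      have npos: "0 < real n" using n1 by simp
      define q where "q = n div k"
      define r where "r = n mod k"
      have nqr: "n = q * k + r" unfolding q_def r_def by simp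
      have rk: "r < k" unfolding r_def using k by simp
      have "u n \<le> real q * u k + u r" unfolding nqr by (rule subadd_mult[OF sub])
      also have "\<dots> \<le> real q * u k + M" using M[OF rk] by simp
      finally have un: "u n \<le> real q * u k + M" .
      have qk: "real q * real k \<le> real n" unfolding nqr by simp
      have kpos: "0 < real k" using k by simp
      have "real q * u k = (real q * real k) * (u k / real k)" using kpos by simp
      also have "\<dots> \<le> real n * (u k / real k)"
        by (rule mult_right_mono[OF qk]) (use nonneg kpos in simp)
      finally have "u n \<le> real n * (u k / real k) + M" using un by simp
      hence "u n / real n \<le> u k / real k + M / real n" using npos by (simp add: field_simps)
      moreover have "M / real n < e / 2"
      proof -
        have "2 * M < e * real n" using nN e by (simp add: field_simps)
        thus ?thesis using npos by (simp add: field_simps)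
      qed
      ultimately have "u n / real n < L + e" using k by linarith
      moreover have "L \<le> u n / real n" by (rule low[OF n1])
      ultimately show "norm (u n / real n - L) < e" by simp
    qed
  qed
  thus ?thesis unfolding convergent_def by blast
qed

lemma lim_compare:
  fixes a b :: "nat \<Rightarrow> real" and C :: real
  assumes ca: "convergent (\<lambda>n. a n / real n)"
    and bnd: "\<And>n. \<bar>a n - b n\<bar> \<le> C"
  shows "lim (\<lambda>n. a n / real n) = lim (\<lambda>n. b n / real n)"
proof -
  obtain L where L: "(\<lambda>n. a n / real n) \<longlonglongrightarrow> L" using ca unfolding convergent_def by blast
  have z: "(\<lambda>n. C / real n) \<longlonglongrightarrow> 0" by (rule lim_const_over_n)
  have bd: "\<bar>b n / real n - a n / real n\<bar> \<le> C / real n" if "1 \<le> n" for n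
  proof -
    have np: "0 < real n" using that by simp
    have "\<bar>b n / real n - a n / real n\<bar> = \<bar>b n - a n\<bar> / real n"
      using np by (simp add: diff_divide_distrib[symmetric])
    also have "\<dots> \<le> C / real n" using bnd[of n] np by (simp add: abs_minus_commute divide_right_mono)
    finally show ?thesis .
  qed
  have z': "(\<lambda>n. - (C / real n)) \<longlonglongrightarrow> 0" using tendsto_minus[OF z] by simp
  have d: "(\<lambda>n. b n / real n - a n / real n) \<longlonglongrightarrow> 0"
  proof (rule tendsto_sandwich[OF _ _ z' z])
    show "\<forall>\<^sub>F n in sequentially. - (C / real n) \<le> b n / real n - a n / real n"
      by (rule eventually_sequentiallyI[of 1]) (use bd in \<open>fastforce simp: abs_le_iff\<close>)
    show "\<forall>\<^sub>F n in sequentially. b n / real n - a n / real n \<le> C / real n"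
      by (rule eventually_sequentiallyI[of 1]) (use bd in \<open>fastforce simp: abs_le_iff\<close>)
  qed
  have "(\<lambda>n. (b n / real n - a n / real n) + a n / real n) \<longlonglongrightarrow> 0 + L" by (rule tendsto_add[OF d L])
  hence "(\<lambda>n. b n / real n) \<longlonglongrightarrow> L" by simp
  thus ?thesis using L by (simp add: limI)
qed


section \<open>Iterates\<close>

lemma iter_hom: "\<chi> \<in> ring_hom T T \<Longrightarrow> \<chi> ^^ n \<in> ring_hom T T"
proof (induction n)
  case 0 thus ?case using id_ring_hom[of T] by (simp add: id_def)
next
  case (Suc n)
  have "\<chi> \<circ> (\<chi> ^^ n) \<in> ring_hom T T" by (rule ring_hom_trans[OF Suc.IH[OF Suc.prems] Suc.prems])
  thus ?case by (simp add: comp_def)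
qed

lemma iter_max: "\<chi> ` M \<subseteq> M \<Longrightarrow> (\<chi> ^^ n) ` M \<subseteq> M"
proof (induction n)
  case 0 thus ?case by simp
next
  case (Suc n)
  have "(\<chi> ^^ Suc n) ` M = \<chi> ` ((\<chi> ^^ n) ` M)" by (simp add: image_comp)
  also have "\<dots> \<subseteq> \<chi> ` M" using Suc by blast
  also have "\<dots> \<subseteq> M" by (rule Suc.prems)
  finally show ?case .
qed

lemma iter_comm:
  assumes "\<forall>x\<in>carrier R. \<psi> (f x) = f (\<phi> x)" "\<phi> ` carrier R \<subseteq> carrier R"
  shows "x \<in> carrier R \<Longrightarrow> (\<psi> ^^ n) (f x) = f ((\<phi> ^^ n) x)"
proof (induction n arbitrary: x)
  case 0 thus ?case by simp
next
  case (Suc n)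
  have "(\<psi> ^^ Suc n) (f x) = (\<psi> ^^ n) (\<psi> (f x))" by (simp only: funpow_Suc_right comp_apply)
  also have "\<dots> = (\<psi> ^^ n) (f (\<phi> x))" using assms(1) Suc.prems by simp
  also have "\<dots> = f ((\<phi> ^^ n) (\<phi> x))" using Suc.IH assms(2) Suc.prems by blast
  also have "\<dots> = f ((\<phi> ^^ Suc n) x)" by (simp only: funpow_Suc_right comp_apply)
  finally show ?case .
qed

lemma (in ring) Idl_ideal_eq: "ideal I R \<Longrightarrow> Idl I = I"
  using genideal_minimal[of I I] genideal_self[OF ideal_sub[of I R]] by blast

lemma (in cring) len_above_max:
  assumes loc: "local_ring R" and q: "ideal q R" and mq: "max_ideal R \<subseteq> q"
  shows "len R q (carrier R) \<le> enat 1"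
proof (rule len_least)
  have mx: "maximalideal (max_ideal R) R" using local_max[OF loc] .
  fix n C assume c: "ischain R q (carrier R) n C"
  show "enat n \<le> enat 1"
  proof (rule ccontr)
    assume "\<not> enat n \<le> enat 1"
    hence n: "2 \<le> n" by simp
    have cs: "\<forall>i<n. C i \<subset> C (Suc i)" and ci: "\<forall>i\<le>n. ideal (C i) R \<and> q \<subseteq> C i \<and> C i \<subseteq> carrier R"
      using c unfolding ischain_def by auto
    have c0: "q \<subseteq> C 0" "C 0 \<subset> C 1" "C 1 \<subset> C (Suc 1)" "ideal (C 1) R" "C (Suc 1) \<subseteq> carrier R"
      using cs[rule_format, of 0] cs[rule_format, of 1] ci[rule_format, of 0] ci[rule_format, of 1]
        ci[rule_format, of "Suc 1"] n by auto
    have "C 1 = max_ideal R \<or> C 1 = carrier R"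
      using maximalideal.I_maximal[OF mx c0(4)] c0 mq ideal_sub by blast
    thus False using c0 mq by auto
  qed
qed

lemma iter_comp:
  assumes loc: "local_ring T" and \<chi>: "\<chi> \<in> ring_hom T T" and \<chi>m: "\<chi> ` max_ideal T \<subseteq> max_ideal T"
    and fin: "len T (Idl\<^bsub>T\<^esub> ((\<chi> ^^ n) ` max_ideal T)) (carrier T) = enat k"
  shows "len T (Idl\<^bsub>T\<^esub> ((\<chi> ^^ (p + n)) ` max_ideal T)) (carrier T)
     \<le> enat k * len T (Idl\<^bsub>T\<^esub> ((\<chi> ^^ p) ` max_ideal T)) (carrier T)"
proof -
  interpret T: cring T using local_cring[OF loc] .
  have mT: "max_ideal T \<subseteq> carrier T" using ideal_sub[OF local_max_ideal[OF loc]] .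
  have W: "(\<chi> ^^ n) ` max_ideal T \<subseteq> carrier T" using iter_max[OF \<chi>m] mT by blast
  have I: "ideal (Idl\<^bsub>T\<^esub> ((\<chi> ^^ n) ` max_ideal T)) T" by (rule T.genideal_ideal[OF W])
  have hp: "\<chi> ^^ p \<in> ring_hom T T" by (rule iter_hom[OF \<chi>])
  have "Idl\<^bsub>T\<^esub> ((\<chi> ^^ p) ` (Idl\<^bsub>T\<^esub> ((\<chi> ^^ n) ` max_ideal T))) = Idl\<^bsub>T\<^esub> ((\<chi> ^^ p) ` (\<chi> ^^ n) ` max_ideal T)"
    by (rule genideal_image[OF T.cring_axioms T.cring_axioms hp W])
  also have "(\<chi> ^^ p) ` (\<chi> ^^ n) ` max_ideal T = (\<chi> ^^ (p + n)) ` max_ideal T"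
    by (simp add: image_comp funpow_add)
  finally have eq: "Idl\<^bsub>T\<^esub> ((\<chi> ^^ p) ` (Idl\<^bsub>T\<^esub> ((\<chi> ^^ n) ` max_ideal T))) = Idl\<^bsub>T\<^esub> ((\<chi> ^^ (p + n)) ` max_ideal T)" .
  show ?thesis using comp_bound[OF loc T.cring_axioms hp I fin] unfolding eq .
qed

lemma iter_fin:
  assumes loc: "local_ring T" and \<chi>: "\<chi> \<in> ring_hom T T" and \<chi>m: "\<chi> ` max_ideal T \<subseteq> max_ideal T"
    and fin1: "len T (Idl\<^bsub>T\<^esub> (\<chi> ` max_ideal T)) (carrier T) = enat c1"
  shows "\<exists>k. len T (Idl\<^bsub>T\<^esub> ((\<chi> ^^ n) ` max_ideal T)) (carrier T) = enat k"
proof (induction n)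
  case 0
  interpret T: cring T using local_cring[OF loc] .
  have "Idl\<^bsub>T\<^esub> ((\<chi> ^^ 0) ` max_ideal T) = max_ideal T"
    using T.Idl_ideal_eq[OF local_max_ideal[OF loc]] by simp
  hence "len T (Idl\<^bsub>T\<^esub> ((\<chi> ^^ 0) ` max_ideal T)) (carrier T) \<le> enat 1"
    using T.len_above_max[OF loc local_max_ideal[OF loc] order_refl] by simp
  thus ?case using enat_ile by blast
next
  case (Suc n)
  then obtain k where k: "len T (Idl\<^bsub>T\<^esub> ((\<chi> ^^ n) ` max_ideal T)) (carrier T) = enat k" by blast
  have "len T (Idl\<^bsub>T\<^esub> ((\<chi> ^^ (1 + n)) ` max_ideal T)) (carrier T)
     \<le> enat k * len T (Idl\<^bsub>T\<^esub> ((\<chi> ^^ 1) ` max_ideal T)) (carrier T)"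
    by (rule iter_comp[OF loc \<chi> \<chi>m k])
  also have "\<chi> ^^ 1 = \<chi>" by simp
  finally have "len T (Idl\<^bsub>T\<^esub> ((\<chi> ^^ Suc n) ` max_ideal T)) (carrier T) \<le> enat (k * c1)"
    using fin1 by simp
  thus ?case using enat_ile by blast
qed

lemma iter_ge1:
  assumes loc: "local_ring T" and \<chi>m: "\<chi> ` max_ideal T \<subseteq> max_ideal T"
  shows "1 \<le> len T (Idl\<^bsub>T\<^esub> ((\<chi> ^^ n) ` max_ideal T)) (carrier T)"
proof -
  interpret T: cring T using local_cring[OF loc] .
  have mi: "ideal (max_ideal T) T" using local_max_ideal[OF loc] .
  have mT: "max_ideal T \<subseteq> carrier T" using ideal_sub[OF mi] .
  have W: "(\<chi> ^^ n) ` max_ideal T \<subseteq> max_ideal T" using iter_max[OF \<chi>m] .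
  have I: "ideal (Idl\<^bsub>T\<^esub> ((\<chi> ^^ n) ` max_ideal T)) T" using T.genideal_ideal W mT by blast
  have "Idl\<^bsub>T\<^esub> ((\<chi> ^^ n) ` max_ideal T) \<subseteq> max_ideal T" by (rule T.genideal_minimal[OF mi W])
  hence "Idl\<^bsub>T\<^esub> ((\<chi> ^^ n) ` max_ideal T) \<noteq> carrier T" using local_max_ne[OF loc] mT by blast
  thus ?thesis by (rule T.len_ge1[OF I])
qed

lemma (in cring) rad_from_len:
  assumes loc: "local_ring R" and Q: "ideal Q R" and k: "len R Q (carrier R) = enat k"
    and x: "x \<in> max_ideal R"
  shows "\<exists>e::nat. x [^] e \<in> Q"
proof (rule ccontr)
  assume none: "\<not> (\<exists>e::nat. x [^] e \<in> Q)"
  have mi: "ideal (max_ideal R) R" using local_max_ideal[OF loc] .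
  have xc: "x \<in> carrier R" using x ideal_sub[OF mi] by blast
  define P where "P j = Q <+>\<^bsub>R\<^esub> PIdl (x [^] (j::nat))" for j
  have Pi: "ideal (P j) R" for j unfolding P_def by (rule sum_PIdl_ideal[OF Q]) (use xc in simp)
  have Pfin: "\<exists>m. len R (P j) (carrier R) = enat m \<and> m \<le> k" for j
  proof -
    have "len R (P j) (carrier R) \<le> len R Q (carrier R)" unfolding P_def
      by (rule len_mono[OF sum_PIdl_sup(1)[OF Q] order_refl]) (use xc in simp)
    hence le: "len R (P j) (carrier R) \<le> enat k" using k by simp
    then obtain m where "len R (P j) (carrier R) = enat m" using enat_ile by blast
    thus ?thesis using le by simp
  qed
  have strict: "P (Suc j) \<subset> P j" for j
  proof -
    have xj: "x [^] j \<in> carrier R" using xc by simp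
    have sub: "P (Suc j) \<subseteq> P j"
    proof
      fix z assume "z \<in> P (Suc j)"
      then obtain i b where ib: "i \<in> Q" "b \<in> carrier R" "z = i \<oplus> b \<otimes> x [^] Suc j"
        unfolding P_def using mem_sum_PIdl by blast
      have "b \<otimes> x [^] Suc j = (b \<otimes> x) \<otimes> x [^] j" using ib(2) xc xj by (simp add: m_ac)
      hence "z = i \<oplus> (b \<otimes> x) \<otimes> x [^] j" using ib(3) by simp
      moreover have "b \<otimes> x \<in> carrier R" using ib(2) xc by simp
      ultimately show "z \<in> P j" unfolding P_def using ib(1) mem_sum_PIdl by blast
    qed
    have "x [^] j \<notin> P (Suc j)"
    proof
      assume "x [^] j \<in> P (Suc j)"
      then obtain i b where ib: "i \<in> Q" "b \<in> carrier R" "x [^] j = i \<oplus> b \<otimes> x [^] Suc j"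
        unfolding P_def using mem_sum_PIdl by blast
      have ic: "i \<in> carrier R" using ib(1) ideal_sub[OF Q] by blast
      define t where "t = b \<otimes> x [^] Suc j"
      have tc: "t \<in> carrier R" unfolding t_def using ib(2) xc by simp
      have h: "x [^] j = i \<oplus> t" using ib(3) unfolding t_def .
      have e0: "x [^] Suc j = x [^] j \<otimes> x" by simp
      have e1: "(\<one> \<ominus> b \<otimes> x) \<otimes> x [^] j = x [^] j \<ominus> t" unfolding t_def e0 using ib(2) xc xj by algebra
      have e2: "x [^] j \<ominus> t = (i \<oplus> t) \<ominus> t" using h by simp
      have e3: "(i \<oplus> t) \<ominus> t = i" using ic tc by algebra
      have ui: "(\<one> \<ominus> b \<otimes> x) \<otimes> x [^] j \<in> Q" using e1 e2 e3 ib(1) by simp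
      have "b \<otimes> x \<in> max_ideal R" by (rule ideal.I_l_closed[OF mi x ib(2)])
      then obtain v where v: "v \<in> carrier R" "v \<otimes> (\<one> \<ominus> b \<otimes> x) = \<one>" using local_one_minus[OF loc] by blast
      have "x [^] j \<in> Q" by (rule unit_cancel[OF Q _ xj v ui]) (use ib(2) xc in simp)
      thus False using none by blast
    qed
    moreover have "x [^] j \<in> P j" unfolding P_def by (rule sum_PIdl_sup(2)[OF Q]) (use xc in simp)
    ultimately show ?thesis using sub by blast
  qed
  have grow: "\<exists>m. len R (P j) (carrier R) = enat m \<and> j \<le> m" for j
  proof (induction j)
    case 0 thus ?case using Pfin by blast
  next
    case (Suc j)
    obtain m where m: "len R (P j) (carrier R) = enat m" "j \<le> m" using Suc.IH by blast
    obtain m' where m': "len R (P (Suc j)) (carrier R) = enat m'" using Pfin by blast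
    obtain k' where "k' < m'" "len R (P j) (carrier R) = enat k'"
      using len_strict[OF Pi Pi strict ideal_sub[OF Pi] oneideal m'] by blast
    hence "m < m'" using m(1) by simp
    thus ?case using m' m(2) by auto
  qed
  obtain m where m: "len R (P (Suc k)) (carrier R) = enat m" "Suc k \<le> m" using grow by blast
  obtain m2 where "len R (P (Suc k)) (carrier R) = enat m2" "m2 \<le> k" using Pfin by blast
  thus False using m by simp
qed

lemma (in cring) prime_pow:
  assumes P: "primeideal P R" and z: "z \<in> carrier R"
  shows "z [^] (e::nat) \<in> P \<Longrightarrow> e = 0 \<or> z \<in> P"
proof (induction e)
  case 0 thus ?case by simp
next
  case (Suc e)
  have "z [^] e \<otimes> z \<in> P" using Suc.prems by simp
  hence "z [^] e \<in> P \<or> z \<in> P" using primeideal.I_prime[OF P] z by simp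
  moreover have "\<one> \<in> P \<Longrightarrow> z \<in> P"
    using ideal.one_imp_carrier[OF primeideal.axioms(1)[OF P]] z by blast
  ultimately show ?case using Suc.IH by auto
qed



theorem mainTheorem7:
  fixes R :: "('a, 'm) ring_scheme" and S :: "('b, 'n) ring_scheme"
    and f :: "'a \<Rightarrow> 'b" and \<phi> :: "'a \<Rightarrow> 'a" and \<psi> :: "'b \<Rightarrow> 'b"
  assumes "noeth_local_ring R" and "noeth_local_ring S"
    and "finite_length_hom R S f" and "flat_hom R S f"
    and "finite_length_selfmap R \<phi>"
    and "\<psi> \<in> ring_hom S S"
    and "\<forall>x\<in>carrier R. \<psi> (f x) = f (\<phi> x)"
  shows "finite_length_selfmap S \<psi> \<and> alg_entropy R \<phi> = alg_entropy S \<psi>"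
proof -
  have loR: "local_ring R" using noeth_local[OF assms(1)] .
  have loS: "local_ring S" using noeth_local[OF assms(2)] .
  interpret R: cring R using local_cring[OF loR] .
  interpret S: cring S using local_cring[OF loS] .
  have f: "f \<in> ring_hom R S" and fm: "f ` max_ideal R \<subseteq> max_ideal S"
    and fp: "is_primary_for S (max_ideal S) (Idl\<^bsub>S\<^esub> (f ` max_ideal R))"
    using assms(3) unfolding finite_length_hom_def by auto
  have \<phi>: "\<phi> \<in> ring_hom R R" and \<phi>m: "\<phi> ` max_ideal R \<subseteq> max_ideal R"
    and \<phi>p: "is_primary_for R (max_ideal R) (Idl\<^bsub>R\<^esub> (\<phi> ` max_ideal R))"
    using assms(5) unfolding finite_length_selfmap_def finite_length_hom_def by auto
  have \<psi>: "\<psi> \<in> ring_hom S S" by (rule assms(6))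
  have comm: "\<forall>x\<in>carrier R. \<psi> (f x) = f (\<phi> x)" by (rule assms(7))
  have miR: "ideal (max_ideal R) R" using local_max_ideal[OF loR] .
  have miS: "ideal (max_ideal S) S" using local_max_ideal[OF loS] .
  have mRc: "max_ideal R \<subseteq> carrier R" using ideal_sub[OF miR] .
  have mSc: "max_ideal S \<subseteq> carrier S" using ideal_sub[OF miS] .
  have \<phi>c: "\<phi> ` carrier R \<subseteq> carrier R" using ring_hom_closed[OF \<phi>] by blast
  have fmc: "f ` max_ideal R \<subseteq> carrier S" using fm mSc by blast
  have \<phi>mc: "\<phi> ` max_ideal R \<subseteq> carrier R" using \<phi>m mRc by blast
  have Ic: "ideal (Idl\<^bsub>S\<^esub> (f ` max_ideal R)) S" by (rule S.genideal_ideal[OF fmc])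
  have I\<phi>: "ideal (Idl\<^bsub>R\<^esub> (\<phi> ` max_ideal R)) R" by (rule R.genideal_ideal[OF \<phi>mc])
  have radc: "\<forall>x\<in>max_ideal S. \<exists>e::nat. x [^]\<^bsub>S\<^esub> e \<in> Idl\<^bsub>S\<^esub> (f ` max_ideal R)"
  proof
    fix x assume "x \<in> max_ideal S"
    hence "x \<in> radical_ideal S (Idl\<^bsub>S\<^esub> (f ` max_ideal R))" using fp unfolding is_primary_for_def by simp
    thus "\<exists>e::nat. x [^]\<^bsub>S\<^esub> e \<in> Idl\<^bsub>S\<^esub> (f ` max_ideal R)" unfolding radical_ideal_def by simp
  qed
  have rad\<phi>: "\<forall>x\<in>max_ideal R. \<exists>e::nat. x [^]\<^bsub>R\<^esub> e \<in> Idl\<^bsub>R\<^esub> (\<phi> ` max_ideal R)"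
  proof
    fix x assume "x \<in> max_ideal R"
    hence "x \<in> radical_ideal R (Idl\<^bsub>R\<^esub> (\<phi> ` max_ideal R))" using \<phi>p unfolding is_primary_for_def by simp
    thus "\<exists>e::nat. x [^]\<^bsub>R\<^esub> e \<in> Idl\<^bsub>R\<^esub> (\<phi> ` max_ideal R)" unfolding radical_ideal_def by simp
  qed
  obtain c0 where c0: "len S (Idl\<^bsub>S\<^esub> (f ` max_ideal R)) (carrier S) = enat c0"
    using S.len_finite[OF assms(2) Ic radc] by blast
  obtain a1 where a1: "len R (Idl\<^bsub>R\<^esub> (\<phi> ` max_ideal R)) (carrier R) = enat a1"
    using R.len_finite[OF assms(1) I\<phi> rad\<phi>] by blast
  have finA: "\<exists>k. len R (Idl\<^bsub>R\<^esub> ((\<phi> ^^ n) ` max_ideal R)) (carrier R) = enat k" for n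
    by (rule iter_fin[OF loR \<phi> \<phi>m a1])
  define a where "a n = the_enat (len R (Idl\<^bsub>R\<^esub> ((\<phi> ^^ n) ` max_ideal R)) (carrier R))" for n
  have aeq: "len R (Idl\<^bsub>R\<^esub> ((\<phi> ^^ n) ` max_ideal R)) (carrier R) = enat (a n)" for n
    using finA[of n] unfolding a_def by auto
  have Wn: "(\<phi> ^^ n) ` max_ideal R \<subseteq> carrier R" for n using iter_max[OF \<phi>m] mRc by blast
  have In: "ideal (Idl\<^bsub>R\<^esub> ((\<phi> ^^ n) ` max_ideal R)) R" for n by (rule R.genideal_ideal[OF Wn])
  have imgeq: "Idl\<^bsub>S\<^esub> ((\<psi> ^^ n) ` f ` max_ideal R) = Idl\<^bsub>S\<^esub> (f ` (Idl\<^bsub>R\<^esub> ((\<phi> ^^ n) ` max_ideal R)))" for n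
  proof -
    have "((\<psi> ^^ n) \<circ> f) ` max_ideal R = (f \<circ> (\<phi> ^^ n)) ` max_ideal R"
    proof (rule image_cong[OF refl])
      fix x assume "x \<in> max_ideal R"
      hence "x \<in> carrier R" using mRc by blast
      thus "((\<psi> ^^ n) \<circ> f) x = (f \<circ> (\<phi> ^^ n)) x" using iter_comm[OF comm \<phi>c] by simp
    qed
    hence "(\<psi> ^^ n) ` f ` max_ideal R = f ` (\<phi> ^^ n) ` max_ideal R" by (simp add: image_comp)
    moreover have "Idl\<^bsub>S\<^esub> (f ` (Idl\<^bsub>R\<^esub> ((\<phi> ^^ n) ` max_ideal R))) = Idl\<^bsub>S\<^esub> (f ` (\<phi> ^^ n) ` max_ideal R)"
      by (rule genideal_image[OF R.cring_axioms S.cring_axioms f Wn])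
    ultimately show ?thesis by simp
  qed
  have hn: "\<psi> ^^ n \<in> ring_hom S S" for n by (rule iter_hom[OF \<psi>])
  have bi: "len S (Idl\<^bsub>S\<^esub> ((\<psi> ^^ n) ` max_ideal S)) (carrier S) \<le> enat (a n) * enat c0" for n
  proof -
    have psc: "(\<psi> ^^ n) ` max_ideal S \<subseteq> carrier S" using ring_hom_closed[OF hn] mSc by blast
    have "(\<psi> ^^ n) ` f ` max_ideal R \<subseteq> (\<psi> ^^ n) ` max_ideal S" using fm by blast
    hence "Idl\<^bsub>S\<^esub> ((\<psi> ^^ n) ` f ` max_ideal R) \<subseteq> Idl\<^bsub>S\<^esub> ((\<psi> ^^ n) ` max_ideal S)"
      by (rule S.subset_Idl_subset[OF psc])
    hence "len S (Idl\<^bsub>S\<^esub> ((\<psi> ^^ n) ` max_ideal S)) (carrier S) \<le> len S (Idl\<^bsub>S\<^esub> ((\<psi> ^^ n) ` f ` max_ideal R)) (carrier S)"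
      by (rule len_mono[OF _ order_refl])
    also have "\<dots> = len S (Idl\<^bsub>S\<^esub> (f ` (Idl\<^bsub>R\<^esub> ((\<phi> ^^ n) ` max_ideal R)))) (carrier S)" using imgeq by simp
    also have "\<dots> \<le> enat (a n) * len S (Idl\<^bsub>S\<^esub> (f ` max_ideal R)) (carrier S)"
      by (rule comp_bound[OF loR S.cring_axioms f In aeq])
    finally show ?thesis using c0 by simp
  qed
  define b where "b n = the_enat (len S (Idl\<^bsub>S\<^esub> ((\<psi> ^^ n) ` max_ideal S)) (carrier S))" for n
  have beq: "len S (Idl\<^bsub>S\<^esub> ((\<psi> ^^ n) ` max_ideal S)) (carrier S) = enat (b n)" for n
  proof -
    have "len S (Idl\<^bsub>S\<^esub> ((\<psi> ^^ n) ` max_ideal S)) (carrier S) \<le> enat (a n * c0)" using bi[of n] by simp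
    then obtain k where "len S (Idl\<^bsub>S\<^esub> ((\<psi> ^^ n) ` max_ideal S)) (carrier S) = enat k" using enat_ile by blast
    thus ?thesis unfolding b_def by simp
  qed
  have ble: "b n \<le> a n * c0" for n using bi[of n] beq[of n] by simp
  have hh: "ring_hom_ring S S \<psi>" by (rule ring_hom_ringI2[OF S.ring_axioms S.ring_axioms \<psi>])
  have pr: "primeideal (max_ideal S) S" by (rule S.maximalideal_prime[OF local_max[OF loS]])
  have IfS: "Idl\<^bsub>S\<^esub> (f ` max_ideal R) \<subseteq> max_ideal S" by (rule S.genideal_minimal[OF miS fm])
  have \<psi>m: "\<psi> ` max_ideal S \<subseteq> max_ideal S"
  proof
    fix z assume "z \<in> \<psi> ` max_ideal S"
    then obtain x where x: "x \<in> max_ideal S" "z = \<psi> x" by blast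
    have xc: "x \<in> carrier S" using x(1) mSc by blast
    obtain e :: nat where e: "x [^]\<^bsub>S\<^esub> e \<in> Idl\<^bsub>S\<^esub> (f ` max_ideal R)" using radc x(1) by blast
    have pw: "\<psi> (x [^]\<^bsub>S\<^esub> e) = \<psi> x [^]\<^bsub>S\<^esub> e" by (rule ring_hom_ring.hom_nat_pow[OF hh xc])
    have Icc: "Idl\<^bsub>S\<^esub> (f ` max_ideal R) \<subseteq> carrier S" using ideal_sub[OF Ic] .
    have pIc: "\<psi> ` (Idl\<^bsub>S\<^esub> (f ` max_ideal R)) \<subseteq> carrier S" using ring_hom_closed[OF \<psi>] Icc by blast
    have "\<psi> (x [^]\<^bsub>S\<^esub> e) \<in> \<psi> ` (Idl\<^bsub>S\<^esub> (f ` max_ideal R))" using e by blast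
    also have "\<dots> \<subseteq> Idl\<^bsub>S\<^esub> (\<psi> ` (Idl\<^bsub>S\<^esub> (f ` max_ideal R)))" by (rule S.genideal_self[OF pIc])
    also have "\<dots> = Idl\<^bsub>S\<^esub> (\<psi> ` f ` max_ideal R)" by (rule genideal_image[OF S.cring_axioms S.cring_axioms \<psi> fmc])
    also have "\<dots> = Idl\<^bsub>S\<^esub> (f ` (Idl\<^bsub>R\<^esub> ((\<phi> ^^ 1) ` max_ideal R)))" using imgeq[of 1] by simp
    also have "\<dots> \<subseteq> Idl\<^bsub>S\<^esub> (f ` max_ideal R)"
    proof -
      have "Idl\<^bsub>R\<^esub> ((\<phi> ^^ 1) ` max_ideal R) \<subseteq> max_ideal R"
        by (rule R.genideal_minimal[OF miR]) (use \<phi>m in simp)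
      hence "f ` (Idl\<^bsub>R\<^esub> ((\<phi> ^^ 1) ` max_ideal R)) \<subseteq> f ` max_ideal R" by blast
      thus ?thesis by (rule S.subset_Idl_subset[OF fmc])
    qed
    also have "\<dots> \<subseteq> max_ideal S" by (rule IfS)
    finally have "\<psi> x [^]\<^bsub>S\<^esub> e \<in> max_ideal S" using pw by simp
    hence "e = 0 \<or> \<psi> x \<in> max_ideal S" by (rule S.prime_pow[OF pr ring_hom_closed[OF \<psi> xc]])
    moreover have "e \<noteq> 0"
    proof
      assume "e = 0"
      hence "\<one>\<^bsub>S\<^esub> \<in> max_ideal S" using \<open>\<psi> x [^]\<^bsub>S\<^esub> e \<in> max_ideal S\<close> by simp
      thus False using local_one_notin[OF loS] by simp
    qed
    ultimately show "z \<in> max_ideal S" using x(2) by simp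
  qed
  have p1c: "\<psi> ` max_ideal S \<subseteq> carrier S" using \<psi>m mSc by blast
  have qI: "ideal (Idl\<^bsub>S\<^esub> (\<psi> ` max_ideal S)) S" by (rule S.genideal_ideal[OF p1c])
  have qm: "Idl\<^bsub>S\<^esub> (\<psi> ` max_ideal S) \<subseteq> max_ideal S" by (rule S.genideal_minimal[OF miS \<psi>m])
  have qfin: "len S (Idl\<^bsub>S\<^esub> (\<psi> ` max_ideal S)) (carrier S) = enat (b 1)" using beq[of 1] by simp
  have rad: "radical_ideal S (Idl\<^bsub>S\<^esub> (\<psi> ` max_ideal S)) = max_ideal S"
  proof
    show "radical_ideal S (Idl\<^bsub>S\<^esub> (\<psi> ` max_ideal S)) \<subseteq> max_ideal S"
    proof
      fix x assume "x \<in> radical_ideal S (Idl\<^bsub>S\<^esub> (\<psi> ` max_ideal S))"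
      then obtain e :: nat where x: "x \<in> carrier S" "x [^]\<^bsub>S\<^esub> e \<in> Idl\<^bsub>S\<^esub> (\<psi> ` max_ideal S)"
        unfolding radical_ideal_def by blast
      hence xe: "x [^]\<^bsub>S\<^esub> e \<in> max_ideal S" using qm by blast
      hence "e = 0 \<or> x \<in> max_ideal S" by (rule S.prime_pow[OF pr x(1)])
      moreover have "e \<noteq> 0"
      proof
        assume "e = 0"
        hence "\<one>\<^bsub>S\<^esub> \<in> max_ideal S" using xe by simp
        thus False using local_one_notin[OF loS] by simp
      qed
      ultimately show "x \<in> max_ideal S" by simp
    qed
  next
    show "max_ideal S \<subseteq> radical_ideal S (Idl\<^bsub>S\<^esub> (\<psi> ` max_ideal S))"
    proof
      fix x assume x: "x \<in> max_ideal S"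
      obtain e :: nat where "x [^]\<^bsub>S\<^esub> e \<in> Idl\<^bsub>S\<^esub> (\<psi> ` max_ideal S)"
        using S.rad_from_len[OF loS qI qfin x] by blast
      thus "x \<in> radical_ideal S (Idl\<^bsub>S\<^esub> (\<psi> ` max_ideal S))" unfolding radical_ideal_def using x mSc by blast
    qed
  qed
  have prim: "primary_ideal S (Idl\<^bsub>S\<^esub> (\<psi> ` max_ideal S))"
    unfolding primary_ideal_def
  proof (intro conjI ballI impI)
    show "ideal (Idl\<^bsub>S\<^esub> (\<psi> ` max_ideal S)) S" by (rule qI)
    show "Idl\<^bsub>S\<^esub> (\<psi> ` max_ideal S) \<noteq> carrier S" using qm local_max_ne[OF loS] mSc by blast
    fix x y assume x: "x \<in> carrier S" and y: "y \<in> carrier S" and xy: "x \<otimes>\<^bsub>S\<^esub> y \<in> Idl\<^bsub>S\<^esub> (\<psi> ` max_ideal S)"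
    show "x \<in> Idl\<^bsub>S\<^esub> (\<psi> ` max_ideal S) \<or> (\<exists>n::nat. y [^]\<^bsub>S\<^esub> n \<in> Idl\<^bsub>S\<^esub> (\<psi> ` max_ideal S))"
    proof (cases "y \<in> max_ideal S")
      case True
      hence "y \<in> radical_ideal S (Idl\<^bsub>S\<^esub> (\<psi> ` max_ideal S))" using rad by simp
      thus ?thesis unfolding radical_ideal_def by blast
    next
      case False
      obtain v where v: "v \<in> carrier S" "v \<otimes>\<^bsub>S\<^esub> y = \<one>\<^bsub>S\<^esub>" using S.local_unit[OF loS y False] by blast
      have "y \<otimes>\<^bsub>S\<^esub> x \<in> Idl\<^bsub>S\<^esub> (\<psi> ` max_ideal S)" using xy S.m_comm[OF x y] by simp
      hence "x \<in> Idl\<^bsub>S\<^esub> (\<psi> ` max_ideal S)" by (rule S.unit_cancel[OF qI y x v])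
      thus ?thesis by simp
    qed
  qed
  have part1: "finite_length_selfmap S \<psi>"
    unfolding finite_length_selfmap_def finite_length_hom_def is_primary_for_def
    using \<psi> \<psi>m prim rad by simp
  have aii: "a n \<le> c0 * b n" for n
  proof -
    have "len R (Idl\<^bsub>R\<^esub> ((\<phi> ^^ n) ` max_ideal R)) (carrier R)
        \<le> len S (Idl\<^bsub>S\<^esub> (f ` (Idl\<^bsub>R\<^esub> ((\<phi> ^^ n) ` max_ideal R)))) (carrier S)"
      by (rule flat_bound[OF loR loS f fm assms(4) In])
    also have "\<dots> = len S (Idl\<^bsub>S\<^esub> ((\<psi> ^^ n) ` f ` max_ideal R)) (carrier S)" using imgeq by simp
    also have "Idl\<^bsub>S\<^esub> ((\<psi> ^^ n) ` f ` max_ideal R) = Idl\<^bsub>S\<^esub> ((\<psi> ^^ n) ` (Idl\<^bsub>S\<^esub> (f ` max_ideal R)))"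
      by (rule genideal_image[OF S.cring_axioms S.cring_axioms hn fmc, symmetric])
    also have "len S (Idl\<^bsub>S\<^esub> ((\<psi> ^^ n) ` (Idl\<^bsub>S\<^esub> (f ` max_ideal R)))) (carrier S)
        \<le> enat c0 * len S (Idl\<^bsub>S\<^esub> ((\<psi> ^^ n) ` max_ideal S)) (carrier S)"
      by (rule comp_bound[OF loS S.cring_axioms hn Ic c0])
    finally show ?thesis using aeq[of n] beq[of n] by simp
  qed
  have asub: "a (n + p) \<le> a n * a p" for n p
    using iter_comp[OF loR \<phi> \<phi>m aeq[of p], of n] aeq[of "n + p"] aeq[of n] by (simp add: mult.commute)
  have bsub: "b (n + p) \<le> b n * b p" for n p
    using iter_comp[OF loS \<psi> \<psi>m beq[of p], of n] beq[of "n + p"] beq[of n] by (simp add: mult.commute)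
  have age: "1 \<le> a n" for n using iter_ge1[OF loR \<phi>m, of n] aeq[of n] by (simp add: one_enat_def)
  have bge: "1 \<le> b n" for n using iter_ge1[OF loS \<psi>m, of n] beq[of n] by (simp add: one_enat_def)
  have c0ge: "1 \<le> c0"
  proof -
    have "Idl\<^bsub>S\<^esub> (f ` max_ideal R) \<noteq> carrier S" using IfS local_max_ne[OF loS] mSc by blast
    from S.len_ge1[OF Ic this] c0 show ?thesis by (simp add: one_enat_def)
  qed
  define u where "u n = ln (real (a n))" for n
  define w where "w n = ln (real (b n))" for n
  have u0: "0 \<le> u n" for n unfolding u_def using age[of n] by simp
  have w0: "0 \<le> w n" for n unfolding w_def using bge[of n] by simp
  have usub: "u (n + p) \<le> u n + u p" for n p
  proof -
    have "real (a (n + p)) \<le> real (a n) * real (a p)" using asub[of n p] by (simp only: of_nat_mult[symmetric] of_nat_le_iff)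
    hence "ln (real (a (n + p))) \<le> ln (real (a n) * real (a p))" using age[of "n + p"] by simp
    also have "\<dots> = ln (real (a n)) + ln (real (a p))" using age[of n] age[of p] by (simp add: ln_mult)
    finally show ?thesis unfolding u_def .
  qed
  have conv: "convergent (\<lambda>n. u n / real n)" by (rule fekete[OF u0 usub])
  have bnd: "\<bar>u n - w n\<bar> \<le> ln (real c0)" for n
  proof -
    have an: "1 \<le> real (a n)" "1 \<le> real (b n)" "1 \<le> real c0" using age[of n] bge[of n] c0ge by simp_all
    have "real (b n) \<le> real (a n) * real c0" using ble[of n] by (simp only: of_nat_mult[symmetric] of_nat_le_iff)
    hence "ln (real (b n)) \<le> ln (real (a n) * real c0)" using an by simp
    also have "\<dots> = ln (real (a n)) + ln (real c0)" using an by (simp add: ln_mult)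
    finally have 1: "w n \<le> u n + ln (real c0)" unfolding u_def w_def .
    have "real (a n) \<le> real c0 * real (b n)" using aii[of n] by (simp only: of_nat_mult[symmetric] of_nat_le_iff)
    hence "ln (real (a n)) \<le> ln (real c0 * real (b n))" using an by simp
    also have "\<dots> = ln (real c0) + ln (real (b n))" using an by (simp add: ln_mult)
    finally have 2: "u n \<le> ln (real c0) + w n" unfolding u_def w_def .
    show ?thesis using 1 2 by linarith
  qed
  have limeq: "lim (\<lambda>n. u n / real n) = lim (\<lambda>n. w n / real n)" by (rule lim_compare[OF conv bnd])
  have eR: "alg_entropy R \<phi> = lim (\<lambda>n. u n / real n)"
    unfolding alg_entropy_def hom_length_def u_def a_def quot_length_len ..
  have eS: "alg_entropy S \<psi> = lim (\<lambda>n. w n / real n)"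
    unfolding alg_entropy_def hom_length_def w_def b_def quot_length_len ..
  show ?thesis using part1 limeq eR eS by simp
qed


end
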